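(* Let $d\in\mathbb N$ and $K\subset(L^0)^d$. The following are equivalent: (i) $K$ is stable compact; (ii) $K$ is stable, closed and bounded; (iii) $K$ is stable, sequentially closed and bounded; (iv) $K$ is the set of (equivalence classes of) measurable selectors of a measurable correspondence $S_K:\Omega\rightrightarrows\mathbb R^d$ with non-empty compact values. Moreover, in this case the correspondence $S_K$ in (iv) is unique up to a.e. equality.
   Context: $(\Omega,\mathcal F,\mathbb P)$ is a probability space, $L^0$ the real measurable functions modulo a.e. equality, a.e. order, $L^0_{++}=\{r>0\text{ a.e.}\}$. $(L^0)^d$ carries the $L^0$-norm $\|x\|=(\sum_{i=1}^dx_i^2)^{1/2}$ and the topology with base $\{y:\|x-y\|<r\}$, $x\in(L^0)^d$, $r\in L^0_{++}$; "closed" refers to this topology. $K$ is stable if nonempty and $\sum_k1_{A_k}x_k\in K$ for every countable measurable partition $(A_k)$ and $(x_k)\subset K$. $K$ is bounded if there is $r\in L^0$ with $\|x\|\le r$ for all $x\in K$; sequentially closed if $x\in K$ whenever $(x_n)\subset K$ and $x_n\to x$ a.e. A filter on $K$ is stable if it has a filter base which is a collection of stable sets closed under $\sum_k1_{A_k}Y_k=\{\sum_k1_{A_k}y_k:y_k\in Y_k\}$; $K$ is stable compact if it is stable and every stable filter on $K$ has a cluster point in $K$. A correspondence $S:\Omega\rightrightarrows\mathbb R^d$ is measurable if $\{\omega:S(\omega)\cap U\neq\emptyset\}\in\mathcal F$ for each open $U\subset\mathbb R^d$; a measurable selector is a measurable $x:\Omega\to\mathbb R^d$ with $x(\omega)\in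 S(\omega)$ for all $\omega$. *)

theory Defs
  imports "HOL-Probability.Probability"
begin

text \<open>Elements of (L^0)^d are represented by measurable functions Omega -> R^d;
  a subset of (L^0)^d is represented by a saturated set of such functions
  (closed under a.e. equality).\<close>

definition L0 :: "'a measure \<Rightarrow> ('a \<Rightarrow> 'b::euclidean_space) set" where
  "L0 M = borel_measurable M"

definition L0_aeq :: "'a measure \<Rightarrow> ('a \<Rightarrow> 'b) \<Rightarrow> ('a \<Rightarrow> 'b) \<Rightarrow> bool" where
  "L0_aeq M f g \<longleftrightarrow> (AE \<omega> in M. f \<omega> = g \<omega>)"

definition L0_saturated :: "'a measure \<Rightarrow> ('a \<Rightarrow> 'b::euclidean_space) set \<Rightarrow> bool" where
  "L0_saturated M K \<longleftrightarrow> K \<subseteq> L0 M \<and> (\<forall>f\<in>K. \<forall>g\<in>L0 M. L0_aeq M f g \<longrightarrow> g \<in> K)"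

definition L0_partition :: "'a measure \<Rightarrow> (nat \<Rightarrow> 'a set) \<Rightarrow> bool" where
  "L0_partition M A \<longleftrightarrow> (\<forall>k. A k \<in> sets M) \<and> disjoint_family A \<and> (\<Union>k. A k) = space M"

definition L0_paste :: "(nat \<Rightarrow> 'a set) \<Rightarrow> (nat \<Rightarrow> 'a \<Rightarrow> 'b::euclidean_space) \<Rightarrow> 'a \<Rightarrow> 'b" where
  "L0_paste A xs = (\<lambda>\<omega>. \<Sum>k. indicator (A k) \<omega> *\<^sub>R xs k \<omega>)"

definition L0_stable :: "'a measure \<Rightarrow> ('a \<Rightarrow> 'b::euclidean_space) set \<Rightarrow> bool" where
  "L0_stable M K \<longleftrightarrow> L0_saturated M K \<and> K \<noteq> {} \<and>
     (\<forall>A xs. L0_partition M A \<and> (\<forall>k. xs k \<in> K) \<longrightarrow> L0_paste A xs \<in> K)"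

definition L0_paste_set :: "'a measure \<Rightarrow> (nat \<Rightarrow> 'a set) \<Rightarrow> (nat \<Rightarrow> ('a \<Rightarrow> 'b::euclidean_space) set) \<Rightarrow> ('a \<Rightarrow> 'b) set" where
  "L0_paste_set M A Ys = {y \<in> L0 M. \<exists>xs. (\<forall>k. xs k \<in> Ys k) \<and> L0_aeq M y (L0_paste A xs)}"

definition L0_pos :: "'a measure \<Rightarrow> ('a \<Rightarrow> real) \<Rightarrow> bool" where
  "L0_pos M r \<longleftrightarrow> r \<in> borel_measurable M \<and> (AE \<omega> in M. r \<omega> > 0)"

definition L0_ball :: "'a measure \<Rightarrow> ('a \<Rightarrow> 'b::euclidean_space) \<Rightarrow> ('a \<Rightarrow> real) \<Rightarrow> ('a \<Rightarrow> 'b) set" where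
  "L0_ball M x r = {y \<in> L0 M. AE \<omega> in M. norm (x \<omega> - y \<omega>) < r \<omega>}"

definition L0_open :: "'a measure \<Rightarrow> ('a \<Rightarrow> 'b::euclidean_space) set \<Rightarrow> bool" where
  "L0_open M U \<longleftrightarrow> U \<subseteq> L0 M \<and>
     (\<forall>y\<in>U. \<exists>x\<in>L0 M. \<exists>r. L0_pos M r \<and> y \<in> L0_ball M x r \<and> L0_ball M x r \<subseteq> U)"

definition L0_closed :: "'a measure \<Rightarrow> ('a \<Rightarrow> 'b::euclidean_space) set \<Rightarrow> bool" where
  "L0_closed M K \<longleftrightarrow> L0_open M (L0 M - K)"

definition L0_bounded :: "'a measure \<Rightarrow> ('a \<Rightarrow> 'b::euclidean_space) set \<Rightarrow> bool" where
  "L0_bounded M K \<longleftrightarrow> (\<exists>r\<in>borel_measurable M. \<forall>x\<in>K. AE \<omega> in M. norm (x \<omega>) \<le> r \<omega>)"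

definition L0_seq_closed :: "'a measure \<Rightarrow> ('a \<Rightarrow> 'b::euclidean_space) set \<Rightarrow> bool" where
  "L0_seq_closed M K \<longleftrightarrow> (\<forall>xs x. (\<forall>n. xs n \<in> K) \<and> x \<in> L0 M \<and>
      (AE \<omega> in M. (\<lambda>n. xs n \<omega>) \<longlonglongrightarrow> x \<omega>) \<longrightarrow> x \<in> K)"

definition L0_filter :: "'a measure \<Rightarrow> ('a \<Rightarrow> 'b::euclidean_space) set \<Rightarrow> ('a \<Rightarrow> 'b) set set \<Rightarrow> bool" where
  "L0_filter M K \<F> \<longleftrightarrow> (\<forall>F\<in>\<F>. F \<subseteq> K \<and> L0_saturated M F) \<and> K \<in> \<F> \<and> {} \<notin> \<F> \<and>
     (\<forall>F\<in>\<F>. \<forall>G. G \<subseteq> K \<and> L0_saturated M G \<and> F \<subseteq> G \<longrightarrow> G \<in> \<F>) \<and>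
     (\<forall>F\<in>\<F>. \<forall>G\<in>\<F>. F \<inter> G \<in> \<F>)"

definition L0_stable_filter :: "'a measure \<Rightarrow> ('a \<Rightarrow> 'b::euclidean_space) set \<Rightarrow> ('a \<Rightarrow> 'b) set set \<Rightarrow> bool" where
  "L0_stable_filter M K \<F> \<longleftrightarrow> L0_filter M K \<F> \<and>
     (\<exists>\<B>\<subseteq>\<F>. (\<forall>F\<in>\<F>. \<exists>B\<in>\<B>. B \<subseteq> F) \<and> (\<forall>B\<in>\<B>. L0_stable M B) \<and>
        (\<forall>A Ys. L0_partition M A \<and> (\<forall>k. Ys k \<in> \<B>) \<longrightarrow> L0_paste_set M A Ys \<in> \<B>))"

definition L0_cluster :: "'a measure \<Rightarrow> ('a \<Rightarrow> 'b::euclidean_space) set set \<Rightarrow> ('a \<Rightarrow> 'b) \<Rightarrow> bool" where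
  "L0_cluster M \<F> x \<longleftrightarrow> x \<in> L0 M \<and> (\<forall>F\<in>\<F>. \<forall>U. L0_open M U \<and> x \<in> U \<longrightarrow> U \<inter> F \<noteq> {})"

definition L0_stable_compact :: "'a measure \<Rightarrow> ('a \<Rightarrow> 'b::euclidean_space) set \<Rightarrow> bool" where
  "L0_stable_compact M K \<longleftrightarrow> L0_stable M K \<and>
     (\<forall>\<F>. L0_stable_filter M K \<F> \<longrightarrow> (\<exists>x\<in>K. L0_cluster M \<F> x))"

definition meas_corr :: "'a measure \<Rightarrow> ('a \<Rightarrow> 'b::euclidean_space set) \<Rightarrow> bool" where
  "meas_corr M S \<longleftrightarrow> (\<forall>U. open U \<longrightarrow> {\<omega> \<in> space M. S \<omega> \<inter> U \<noteq> {}} \<in> sets M)"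

definition nonempty_compact_values :: "'a measure \<Rightarrow> ('a \<Rightarrow> 'b::euclidean_space set) \<Rightarrow> bool" where
  "nonempty_compact_values M S \<longleftrightarrow> (\<forall>\<omega>\<in>space M. S \<omega> \<noteq> {} \<and> compact (S \<omega>))"

definition L0_selectors :: "'a measure \<Rightarrow> ('a \<Rightarrow> 'b::euclidean_space set) \<Rightarrow> ('a \<Rightarrow> 'b) set" where
  "L0_selectors M S = {x \<in> L0 M. \<exists>y\<in>borel_measurable M. (\<forall>\<omega>\<in>space M. y \<omega> \<in> S \<omega>) \<and> L0_aeq M x y}"

end

theory Submission
  imports Defs
begin


lemma L0_partition_cover: "L0_partition M A \<Longrightarrow> \<omega> \<in> space M \<Longrightarrow> \<exists>k. \<omega> \<in> A k"
  unfolding L0_partition_def by blast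

lemma L0_partition_sets: "L0_partition M A \<Longrightarrow> A k \<in> sets M"
  unfolding L0_partition_def by blast

lemma L0_partition_unique: "L0_partition M A \<Longrightarrow> \<omega> \<in> A k \<Longrightarrow> \<omega> \<in> A j \<Longrightarrow> j = k"
  unfolding L0_partition_def disjoint_family_on_def by (metis IntI UNIV_I empty_iff)

lemma L0_paste_sums:
  fixes xs :: "nat \<Rightarrow> 'a \<Rightarrow> 'b::real_normed_vector"
  assumes "L0_partition M A" "\<omega> \<in> A k"
  shows "(\<lambda>j. indicator (A j) \<omega> *\<^sub>R xs j \<omega>) sums xs k \<omega>"
proof -
  let ?f = "\<lambda>j. indicator (A j) \<omega> *\<^sub>R xs j \<omega>"
  have eq: "?f = (\<lambda>j. if j = k then ?f j else 0)"
  proof (rule ext)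
    fix j show "?f j = (if j = k then ?f j else 0)"
    proof (cases "j = k")
      case False
      then have "\<omega> \<notin> A j" using L0_partition_unique[OF assms(1) assms(2), of j] by blast
      then show ?thesis using False by simp
    qed simp
  qed
  have "?f k = xs k \<omega>" using assms(2) by simp
  with sums_single[of k ?f] eq show ?thesis by simp
qed

lemma L0_paste_eq: "L0_partition M A \<Longrightarrow> \<omega> \<in> A k \<Longrightarrow> L0_paste A xs \<omega> = xs k \<omega>"
  unfolding L0_paste_def using L0_paste_sums[of M A \<omega> k xs] sums_unique by metis

lemma L0_paste_meas:
  assumes A: "L0_partition M A" and xs: "\<And>k. xs k \<in> borel_measurable M"
  shows "L0_paste A xs \<in> borel_measurable M"
proof (rule borel_measurable_LIMSEQ_metric)
  show "(\<lambda>\<omega>. \<Sum>j<n. indicator (A j) \<omega> *\<^sub>R xs j \<omega>) \<in> borel_measurable M" for n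
    using L0_partition_sets[OF A] xs by measurable
  fix \<omega> assume "\<omega> \<in> space M"
  then obtain k where k: "\<omega> \<in> A k" using L0_partition_cover[OF A] by blast
  show "(\<lambda>n. \<Sum>j<n. indicator (A j) \<omega> *\<^sub>R xs j \<omega>) \<longlonglongrightarrow> L0_paste A xs \<omega>"
    using L0_paste_sums[OF A k, of xs] L0_paste_eq[OF A k, of xs] by (simp add: sums_def)
qed


definition fpart :: "'a measure \<Rightarrow> (nat \<Rightarrow> 'a set) \<Rightarrow> nat \<Rightarrow> 'a set" where
  "fpart M E k = (if k = 0 then disjointed E 0 \<union> (space M - (\<Union>i. E i)) else disjointed E k)"

lemma fpart_sub: "fpart M E k \<subseteq> disjointed E k \<union> (space M - (\<Union>i. E i))"
  unfolding fpart_def by auto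

lemma fpart_partition:
  assumes E: "\<And>k. E k \<in> sets M"
  shows "L0_partition M (fpart M E)"
  unfolding L0_partition_def
proof (intro conjI allI)
  have rE: "range E \<subseteq> sets M" using E by auto
  have dE: "disjointed E k \<in> sets M" for k
    using sets.range_disjointed_sets[OF rE] by auto
  have UE: "(\<Union>i. E i) \<in> sets M" using sets.countable_UN[OF rE] by simp
  show "fpart M E k \<in> sets M" for k
    unfolding fpart_def using dE UE E[of 0] by (auto intro!: sets.Un sets.Diff)
  show "disjoint_family (fpart M E)"
  proof (unfold disjoint_family_on_def, intro ballI impI)
    fix m n :: nat assume "m \<noteq> n"
    have dj: "disjointed E m \<inter> disjointed E n = {}"
      using disjoint_family_disjointed[of E] \<open>m \<noteq> n\<close> unfolding disjoint_family_on_def by blast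
    have sub: "disjointed E i \<subseteq> (\<Union>i. E i)" for i using disjointed_subset[of E i] by blast
    have "m = 0 \<or> n = 0 \<or> (fpart M E m = disjointed E m \<and> fpart M E n = disjointed E n)"
      unfolding fpart_def by simp
    then show "fpart M E m \<inter> fpart M E n = {}"
    proof (elim disjE)
      assume "m = 0"
      then have "n \<noteq> 0" using \<open>m \<noteq> n\<close> by simp
      then have "fpart M E n = disjointed E n" by (simp add: fpart_def)
      then show ?thesis using dj sub[of n] fpart_sub[of M E m] by blast
    next
      assume "n = 0"
      then have "m \<noteq> 0" using \<open>m \<noteq> n\<close> by simp
      then have "fpart M E m = disjointed E m" by (simp add: fpart_def)
      then show ?thesis using dj sub[of m] fpart_sub[of M E n] by blast
    qed (use dj in simp)
  qed
  have sub: "\<And>k. E k \<subseteq> space M" using sets.sets_into_space[OF E] by blast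
  show "(\<Union>k. fpart M E k) = space M"
  proof
    show "(\<Union>k. fpart M E k) \<subseteq> space M"
    proof
      fix \<omega> assume "\<omega> \<in> (\<Union>k. fpart M E k)"
      then obtain k where "\<omega> \<in> fpart M E k" by blast
      then have "\<omega> \<in> disjointed E k \<or> \<omega> \<in> space M" using fpart_sub[of M E k] by blast
      then show "\<omega> \<in> space M" using disjointed_subset[of E k] sub[of k] by blast
    qed
    show "space M \<subseteq> (\<Union>k. fpart M E k)"
    proof
      fix \<omega> assume "\<omega> \<in> space M"
      show "\<omega> \<in> (\<Union>k. fpart M E k)"
      proof (cases "\<omega> \<in> (\<Union>i. E i)")
        case True
        then obtain k where k: "\<omega> \<in> disjointed E k" using UN_disjointed_eq[of E] by blast
        have "disjointed E k \<subseteq> fpart M E k" unfolding fpart_def by auto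
        then show ?thesis using k by blast
      next
        case False
        then have "\<omega> \<in> fpart M E 0" using \<open>\<omega> \<in> space M\<close> unfolding fpart_def by simp
        then show ?thesis by blast
      qed
    qed
  qed
qed

lemma fpart_first:
  assumes "\<omega> \<in> fpart M E k" "\<omega> \<in> (\<Union>i. E i)"
  shows "\<omega> \<in> E k \<and> (\<forall>j<k. \<omega> \<notin> E j)"
proof -
  have "\<omega> \<in> disjointed E k" using assms fpart_sub[of M E k] by blast
  then show ?thesis unfolding disjointed_def by auto
qed

lemma stable_paste_first:
  fixes E :: "nat \<Rightarrow> 'a set"
  assumes B: "L0_stable M B" and xs: "\<And>k. xs k \<in> B" and E: "\<And>k. E k \<in> sets M"
  shows "\<exists>z\<in>B. \<forall>\<omega>\<in>space M. (\<exists>k. \<omega> \<in> E k) \<longrightarrow> (\<exists>k. \<omega> \<in> E k \<and> (\<forall>j<k. \<omega> \<notin> E j) \<and> z \<omega> = xs k \<omega>)"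
proof -
  have P: "L0_partition M (fpart M E)" by (rule fpart_partition[OF E])
  have st: "\<forall>A xs. L0_partition M A \<and> (\<forall>k. xs k \<in> B) \<longrightarrow> L0_paste A xs \<in> B"
    using B unfolding L0_stable_def by (elim conjE)
  have xs': "\<forall>k. xs k \<in> B" using xs by simp
  have zB: "L0_paste (fpart M E) xs \<in> B" using st P xs' by simp
  have "\<forall>\<omega>\<in>space M. (\<exists>k. \<omega> \<in> E k) \<longrightarrow> (\<exists>k. \<omega> \<in> E k \<and> (\<forall>j<k. \<omega> \<notin> E j) \<and> L0_paste (fpart M E) xs \<omega> = xs k \<omega>)"
  proof (intro ballI impI)
    fix \<omega> assume \<omega>: "\<omega> \<in> space M" and ex: "\<exists>k. \<omega> \<in> E k"
    obtain k where k: "\<omega> \<in> fpart M E k" using L0_partition_cover[OF P \<omega>] by (elim exE)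
    have "\<omega> \<in> (\<Union>i. E i)" using ex by simp
    from fpart_first[OF k this] have "\<omega> \<in> E k \<and> (\<forall>j<k. \<omega> \<notin> E j)" .
    moreover have "L0_paste (fpart M E) xs \<omega> = xs k \<omega>" by (rule L0_paste_eq[OF P k])
    ultimately show "\<exists>k. \<omega> \<in> E k \<and> (\<forall>j<k. \<omega> \<notin> E j) \<and> L0_paste (fpart M E) xs \<omega> = xs k \<omega>"
      by (intro exI[of _ k]) simp
  qed
  then show ?thesis using zB by (intro bexI[of _ "L0_paste (fpart M E) xs"])
qed

lemma stable_paste_ae:
  fixes E :: "nat \<Rightarrow> 'a set"
  assumes B: "L0_stable M B" and xs: "\<And>k. xs k \<in> B" and E: "\<And>k. E k \<in> sets M"
    and cov: "AE \<omega> in M. \<exists>k. \<omega> \<in> E k"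
  shows "\<exists>z\<in>B. AE \<omega> in M. \<exists>k. \<omega> \<in> E k \<and> z \<omega> = xs k \<omega>"
proof -
  obtain z where zB: "z \<in> B" and z: "\<forall>\<omega>\<in>space M. (\<exists>k. \<omega> \<in> E k) \<longrightarrow> (\<exists>k. \<omega> \<in> E k \<and> (\<forall>j<k. \<omega> \<notin> E j) \<and> z \<omega> = xs k \<omega>)"
    using stable_paste_first[where xs=xs and E=E, OF B xs E] by (elim bexE)
  have "AE \<omega> in M. \<exists>k. \<omega> \<in> E k \<and> z \<omega> = xs k \<omega>"
    using cov AE_space
  proof eventually_elim
    case (elim \<omega>)
    then obtain k where "\<omega> \<in> E k \<and> (\<forall>j<k. \<omega> \<notin> E j) \<and> z \<omega> = xs k \<omega>" using z by meson
    then show ?case by (intro exI[of _ k]) simp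
  qed
  then show ?thesis using zB by (intro bexI[of _ z])
qed

lemma stable_paste2:
  assumes B: "L0_stable M B" and x: "x \<in> B" and y: "y \<in> B" and E: "E \<in> sets M"
  shows "\<exists>z\<in>B. \<forall>\<omega>\<in>space M. (\<omega> \<in> E \<longrightarrow> z \<omega> = x \<omega>) \<and> (\<omega> \<notin> E \<longrightarrow> z \<omega> = y \<omega>)"
proof -
  define E' where "E' k = (if k = 0 then E else space M)" for k :: nat
  define xs where "xs k = (if k = 0 then x else y)" for k :: nat
  have xsB: "xs k \<in> B" for k using x y by (simp add: xs_def)
  have EM: "E' k \<in> sets M" for k using E by (simp add: E'_def)
  obtain z where zB: "z \<in> B" and z: "\<forall>\<omega>\<in>space M. (\<exists>k. \<omega> \<in> E' k) \<longrightarrow> (\<exists>k. \<omega> \<in> E' k \<and> (\<forall>j<k. \<omega> \<notin> E' j) \<and> z \<omega> = xs k \<omega>)"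
    using stable_paste_first[where xs=xs and E=E', OF B xsB EM] by (elim bexE)
  have "\<forall>\<omega>\<in>space M. (\<omega> \<in> E \<longrightarrow> z \<omega> = x \<omega>) \<and> (\<omega> \<notin> E \<longrightarrow> z \<omega> = y \<omega>)"
  proof (intro ballI conjI impI)
    fix \<omega> assume \<omega>: "\<omega> \<in> space M"
    have "\<omega> \<in> E' 1" using \<omega> by (simp add: E'_def)
    then obtain k where k: "\<omega> \<in> E' k" "\<forall>j<k. \<omega> \<notin> E' j" "z \<omega> = xs k \<omega>"
      using z \<omega> by meson
    show "\<omega> \<in> E \<Longrightarrow> z \<omega> = x \<omega>"
    proof -
      assume "\<omega> \<in> E"
      then have "k = 0" using k(2) by (cases k) (auto simp: E'_def)
      then show ?thesis using k(3) by (simp add: xs_def)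
    qed
    show "\<omega> \<notin> E \<Longrightarrow> z \<omega> = y \<omega>"
    proof -
      assume "\<omega> \<notin> E"
      then have "k \<noteq> 0" using k(1) by (cases "k = 0") (auto simp: E'_def)
      then show ?thesis using k(3) by (simp add: xs_def)
    qed
  qed
  then show ?thesis using zB by (intro bexI[of _ z])
qed

lemma ess_max:
  fixes \<S> :: "'a set set"
  assumes P: "prob_space M" and S: "\<S> \<subseteq> sets M" "\<S> \<noteq> {}"
    and dir: "\<And>E::nat \<Rightarrow> 'a set. range E \<subseteq> \<S> \<Longrightarrow> \<exists>F\<in>\<S>. AE \<omega> in M. \<omega> \<in> (\<Union>i. E i) \<longrightarrow> \<omega> \<in> F"
  shows "\<exists>F\<in>\<S>. \<forall>E\<in>\<S>. AE \<omega> in M. \<omega> \<in> E \<longrightarrow> \<omega> \<in> F"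
proof -
  interpret prob_space M by fact
  define s where "s = Sup (measure M ` \<S>)"
  have bdd: "bdd_above (measure M ` \<S>)"
    by (rule bdd_aboveI[of _ 1]) (auto simp: measure_le_1)
  have le_s: "measure M E \<le> s" if "E \<in> \<S>" for E
    unfolding s_def using bdd that by (intro cSup_upper) auto
  have "\<exists>E\<in>\<S>. s - 1 / Suc n < measure M E" for n
  proof -
    have "s - 1 / Suc n < s" by simp
    then show ?thesis unfolding s_def using S(2) by (subst (asm) less_cSup_iff) (auto simp: bdd)
  qed
  then obtain E where E: "\<And>n. E n \<in> \<S>" "\<And>n. s - 1 / Suc n < measure M (E n)" by metis
  obtain F where F: "F \<in> \<S>" "AE \<omega> in M. \<omega> \<in> (\<Union>i. E i) \<longrightarrow> \<omega> \<in> F"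
    using dir[of E] E(1) by blast
  have EF: "measure M (E n) \<le> measure M F" for n
    using F S(1) by (intro finite_measure_mono_AE) (auto elim!: AE_mp)
  have "s - 1 / Suc n < measure M F" for n using E(2)[of n] EF[of n] by linarith
  then have "s \<le> measure M F"
  proof (rule_tac ccontr)
    assume a: "\<And>n. s - 1 / Suc n < measure M F" and "\<not> s \<le> measure M F"
    then have "0 < s - measure M F" by simp
    then obtain n where n: "inverse (real (Suc n)) < s - measure M F"
      using reals_Archimedean by blast
    show False using a[of n] n by (simp add: inverse_eq_divide)
  qed
  have msF: "measure M F = s" using le_s[OF F(1)] \<open>s \<le> measure M F\<close> by simp
  show ?thesis
  proof (intro bexI[OF _ F(1)] ballI)
    fix E' assume E': "E' \<in> \<S>"
    define G where "G i = (if i = 0 then F else E')" for i :: nat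
    obtain F' where F': "F' \<in> \<S>" "AE \<omega> in M. \<omega> \<in> (\<Union>i. G i) \<longrightarrow> \<omega> \<in> F'"
      using dir[of G] F(1) E' by (auto simp: G_def)
    have U: "(\<Union>i. G i) = F \<union> E'" by (auto simp: G_def split: if_splits)
    have "measure M (F \<union> E') \<le> measure M F'"
      using F' S(1) U by (intro finite_measure_mono_AE) auto
    also have "\<dots> \<le> s" using le_s[OF F'(1)] .
    finally have "measure M (F \<union> E') \<le> measure M F" using msF by simp
    moreover have "measure M (F \<union> E') = measure M F + measure M (E' - F)"
      using F(1) E' S(1) by (intro finite_measure_Union') auto
    ultimately have "measure M (E' - F) = 0" using measure_nonneg[of M "E' - F"] by linarith
    then have "E' - F \<in> null_sets M"
      using F(1) E' S(1) by (auto simp: emeasure_eq_measure null_sets_def)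
    from AE_not_in[OF this] show "AE \<omega> in M. \<omega> \<in> E' \<longrightarrow> \<omega> \<in> F" by eventually_elim auto
  qed
qed





lemma stable_sat: "L0_stable M B \<Longrightarrow> L0_saturated M B"
  unfolding L0_stable_def by simp

lemma stable_ne: "L0_stable M B \<Longrightarrow> B \<noteq> {}"
  unfolding L0_stable_def by simp

lemma sat_meas: "L0_saturated M B \<Longrightarrow> x \<in> B \<Longrightarrow> x \<in> borel_measurable M"
  unfolding L0_saturated_def L0_def by blast

lemma stable_meas: "L0_stable M B \<Longrightarrow> x \<in> B \<Longrightarrow> x \<in> borel_measurable M"
  using sat_meas[OF stable_sat] by blast

lemma sat_aeq: "L0_saturated M B \<Longrightarrow> x \<in> B \<Longrightarrow> y \<in> borel_measurable M \<Longrightarrow> (AE \<omega> in M. x \<omega> = y \<omega>) \<Longrightarrow> y \<in> B"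
  unfolding L0_saturated_def L0_def L0_aeq_def by blast

lemma stable_paste_in: "L0_stable M B \<Longrightarrow> L0_partition M A \<Longrightarrow> (\<And>k. xs k \<in> B) \<Longrightarrow> L0_paste A xs \<in> B"
  unfolding L0_stable_def by blast

lemma AE_paste:
  assumes A: "L0_partition M A" and H: "\<And>k. AE \<omega> in M. \<omega> \<in> A k \<longrightarrow> P k \<omega>"
  shows "AE \<omega> in M. \<forall>k. \<omega> \<in> A k \<longrightarrow> P k \<omega>"
  using H by (subst AE_all_countable) blast

lemma L0_ball_open:
  assumes "x \<in> L0 M" "L0_pos M r"
  shows "L0_open M (L0_ball M x r)"
  unfolding L0_open_def
proof (intro conjI ballI)
  show "L0_ball M x r \<subseteq> L0 M" unfolding L0_ball_def by blast
  fix y assume "y \<in> L0_ball M x r"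
  then show "\<exists>x'\<in>L0 M. \<exists>r'. L0_pos M r' \<and> y \<in> L0_ball M x' r' \<and> L0_ball M x' r' \<subseteq> L0_ball M x r"
    using assms by blast
qed

lemma L0_ball_center:
  assumes "x \<in> L0 M" "L0_pos M r"
  shows "x \<in> L0_ball M x r"
proof -
  have "AE \<omega> in M. 0 < r \<omega>" using assms(2) unfolding L0_pos_def by simp
  then have "AE \<omega> in M. norm (x \<omega> - x \<omega>) < r \<omega>" by eventually_elim simp
  then show ?thesis using assms(1) unfolding L0_ball_def by simp
qed

lemma stable_ess:
  fixes P :: "'b::euclidean_space \<Rightarrow> 'a \<Rightarrow> bool"
  assumes M: "prob_space M" and B: "L0_stable M B"
    and meas: "\<And>x. x \<in> B \<Longrightarrow> {\<omega>\<in>space M. P (x \<omega>) \<omega>} \<in> sets M"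
  shows "\<exists>x0\<in>B. \<forall>x\<in>B. AE \<omega> in M. P (x \<omega>) \<omega> \<longrightarrow> P (x0 \<omega>) \<omega>"
proof -
  define S where "S x = {\<omega>\<in>space M. P (x \<omega>) \<omega>}" for x
  have "\<exists>F\<in>S ` B. \<forall>E\<in>S ` B. AE \<omega> in M. \<omega> \<in> E \<longrightarrow> \<omega> \<in> F"
  proof (rule ess_max[OF M])
    show "S ` B \<subseteq> sets M" using meas by (auto simp: S_def)
    show "S ` B \<noteq> {}" using stable_ne[OF B] by simp
    fix E :: "nat \<Rightarrow> 'a set" assume "range E \<subseteq> S ` B"
    then have "\<forall>k. \<exists>x\<in>B. E k = S x" by blast
    then obtain xs where xs: "\<And>k. xs k \<in> B" "\<And>k. E k = S (xs k)" by metis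
    have Em: "E k \<in> sets M" for k using xs meas by (simp add: S_def)
    obtain z where zB: "z \<in> B" and z: "\<forall>\<omega>\<in>space M. (\<exists>k. \<omega> \<in> E k) \<longrightarrow> (\<exists>k. \<omega> \<in> E k \<and> (\<forall>j<k. \<omega> \<notin> E j) \<and> z \<omega> = xs k \<omega>)"
      using stable_paste_first[where xs=xs and E=E, OF B xs(1) Em] by (elim bexE)
    have "(\<Union>i. E i) \<subseteq> S z"
    proof
      fix \<omega> assume "\<omega> \<in> (\<Union>i. E i)"
      then obtain i where i: "\<omega> \<in> E i" by blast
      then have \<omega>: "\<omega> \<in> space M" using xs(2)[of i] by (simp add: S_def)
      obtain k where k: "\<omega> \<in> E k" "z \<omega> = xs k \<omega>" using z \<omega> i by meson
      show "\<omega> \<in> S z" using k xs(2)[of k] \<omega> by (simp add: S_def)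
    qed
    then show "\<exists>F\<in>S ` B. AE \<omega> in M. \<omega> \<in> (\<Union>i. E i) \<longrightarrow> \<omega> \<in> F"
      using zB by (intro bexI[of _ "S z"]) auto
  qed
  then obtain x0 where x0: "x0 \<in> B" "\<forall>E\<in>S ` B. AE \<omega> in M. \<omega> \<in> E \<longrightarrow> \<omega> \<in> S x0" by blast
  show ?thesis
  proof (intro bexI[OF _ x0(1)] ballI)
    fix x assume "x \<in> B"
    then have "AE \<omega> in M. \<omega> \<in> S x \<longrightarrow> \<omega> \<in> S x0" using x0(2) by blast
    then show "AE \<omega> in M. P (x \<omega>) \<omega> \<longrightarrow> P (x0 \<omega>) \<omega>"
      using AE_space by eventually_elim (simp add: S_def)
  qed
qed

lemma lim_dist_bound:
  fixes w :: "nat \<Rightarrow> 'b::metric_space"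
  assumes "\<And>m. dist (w m) c < 1 / Suc m"
  shows "w \<longlonglongrightarrow> c"
proof -
  have "(\<lambda>m. dist (w m) c) \<longlonglongrightarrow> 0"
  proof (rule real_tendsto_sandwich[of "\<lambda>_. 0" _ _ "\<lambda>m. 1 / Suc m"])
    show "\<forall>\<^sub>F n in sequentially. 0 \<le> dist (w n) c" by simp
    show "\<forall>\<^sub>F n in sequentially. dist (w n) c \<le> 1 / Suc n" using assms by (intro always_eventually allI less_imp_le) blast
    show "(\<lambda>n. 0) \<longlonglongrightarrow> (0::real)" by simp
    show "(\<lambda>n. 1 / real (Suc n)) \<longlonglongrightarrow> 0" using LIMSEQ_inverse_real_of_nat by (simp add: inverse_eq_divide)
  qed
  then show ?thesis using tendsto_dist_iff by blast
qed

lemma stable_closure_in: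
  fixes xs :: "nat \<Rightarrow> 'a \<Rightarrow> 'b::euclidean_space"
  assumes B: "L0_stable M B" and sc: "L0_seq_closed M B" and xs: "\<And>i. xs i \<in> B"
    and c: "c \<in> borel_measurable M" and cl: "AE \<omega> in M. c \<omega> \<in> closure (range (\<lambda>i. xs i \<omega>))"
  shows "c \<in> B"
proof -
  have xsm[measurable]: "xs i \<in> borel_measurable M" for i using stable_meas[OF B xs] .
  note c[measurable]
  define E where "E m i = {\<omega>\<in>space M. dist (xs i \<omega>) (c \<omega>) < 1 / Suc m}" for m i :: nat
  have Em: "E m i \<in> sets M" for m i unfolding E_def by measurable
  have "\<exists>w\<in>B. AE \<omega> in M. dist (w \<omega>) (c \<omega>) < 1 / Suc m" for m
  proof -
    have cov: "AE \<omega> in M. \<exists>i. \<omega> \<in> E m i"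
      using cl AE_space
    proof eventually_elim
      case (elim \<omega>)
      have "0 < 1 / real (Suc m)" by simp
      then obtain y where "y \<in> range (\<lambda>i. xs i \<omega>)" "dist y (c \<omega>) < 1 / Suc m"
        using elim(1) closure_approachable by blast
      then show ?case using elim(2) by (auto simp: E_def)
    qed
    obtain w where wB: "w \<in> B" and w: "AE \<omega> in M. \<exists>i. \<omega> \<in> E m i \<and> w \<omega> = xs i \<omega>"
      using stable_paste_ae[where xs=xs and E="E m", OF B xs Em cov] by (elim bexE)
    have "AE \<omega> in M. dist (w \<omega>) (c \<omega>) < 1 / Suc m"
      using w by eventually_elim (auto simp: E_def)
    then show ?thesis using wB by blast
  qed
  then obtain w where wB: "\<And>m. w m \<in> B" and w: "\<And>m. AE \<omega> in M. dist (w m \<omega>) (c \<omega>) < 1 / Suc m"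
    by metis
  have "AE \<omega> in M. \<forall>m. dist (w m \<omega>) (c \<omega>) < 1 / Suc m" using w by (subst AE_all_countable) blast
  then have "AE \<omega> in M. (\<lambda>m. w m \<omega>) \<longlonglongrightarrow> c \<omega>" by eventually_elim (rule lim_dist_bound, blast)
  then show ?thesis using sc wB c unfolding L0_seq_closed_def L0_def by blast
qed




definition Bfam :: "'a measure \<Rightarrow> ('a \<Rightarrow> 'b) set \<Rightarrow> ('b \<Rightarrow> real \<Rightarrow> 'a \<Rightarrow> bool) \<Rightarrow> ('a \<Rightarrow> real) \<Rightarrow> ('a \<Rightarrow> 'b) set" where
  "Bfam M K Q r = {y \<in> K. AE \<omega> in M. Q (y \<omega>) (r \<omega>) \<omega>}"

lemma Bfam_sub: "Bfam M K Q r \<subseteq> K" unfolding Bfam_def by blast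

lemma Bfam_sat:
  assumes K: "L0_saturated M K"
  shows "L0_saturated M (Bfam M K Q r)"
  unfolding L0_saturated_def
proof (intro conjI ballI impI)
  show "Bfam M K Q r \<subseteq> L0 M" using K unfolding L0_saturated_def Bfam_def by blast
  fix f g assume f: "f \<in> Bfam M K Q r" and g: "g \<in> L0 M" and fg: "L0_aeq M f g"
  have "g \<in> K" using K f g fg unfolding L0_saturated_def Bfam_def by blast
  moreover have "AE \<omega> in M. Q (g \<omega>) (r \<omega>) \<omega>"
  proof -
    have "AE \<omega> in M. Q (f \<omega>) (r \<omega>) \<omega>" using f unfolding Bfam_def by blast
    moreover have "AE \<omega> in M. f \<omega> = g \<omega>" using fg unfolding L0_aeq_def .
    ultimately show ?thesis by eventually_elim simp
  qed
  ultimately show "g \<in> Bfam M K Q r" unfolding Bfam_def by blast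
qed

lemma Bfam_stable:
  fixes K :: "('a \<Rightarrow> 'b::euclidean_space) set"
  assumes K: "L0_stable M K" and ne: "Bfam M K Q r \<noteq> {}"
  shows "L0_stable M (Bfam M K Q r)"
  unfolding L0_stable_def
proof (intro conjI allI impI)
  show "L0_saturated M (Bfam M K Q r)" using Bfam_sat[OF stable_sat[OF K]] .
  show "Bfam M K Q r \<noteq> {}" by fact
  fix A :: "nat \<Rightarrow> 'a set" and xs :: "nat \<Rightarrow> 'a \<Rightarrow> 'b"
  assume a: "L0_partition M A \<and> (\<forall>k. xs k \<in> Bfam M K Q r)"
  then have A: "L0_partition M A" and xs: "\<And>k. xs k \<in> Bfam M K Q r" by auto
  have "L0_paste A xs \<in> K" using stable_paste_in[OF K A] xs Bfam_sub by blast
  moreover have "AE \<omega> in M. Q (L0_paste A xs \<omega>) (r \<omega>) \<omega>"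
  proof -
    have "AE \<omega> in M. \<forall>k. Q (xs k \<omega>) (r \<omega>) \<omega>"
      using xs unfolding Bfam_def by (subst AE_all_countable) blast
    then show ?thesis using AE_space
    proof eventually_elim
      case (elim \<omega>)
      obtain k where k: "\<omega> \<in> A k" using L0_partition_cover[OF A elim(2)] by blast
      show ?case using elim(1) L0_paste_eq[OF A k, of xs] by simp
    qed
  qed
  ultimately show "L0_paste A xs \<in> Bfam M K Q r" unfolding Bfam_def by blast
qed

lemma Bfam_paste_set:
  fixes K :: "('a \<Rightarrow> 'b::euclidean_space) set"
  assumes K: "L0_stable M K" and A: "L0_partition M A" and ne: "\<And>k. Bfam M K Q (rs k) \<noteq> {}"
  shows "L0_paste_set M A (\<lambda>k. Bfam M K Q (rs k)) = Bfam M K Q (L0_paste A rs)"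
proof
  show "L0_paste_set M A (\<lambda>k. Bfam M K Q (rs k)) \<subseteq> Bfam M K Q (L0_paste A rs)"
  proof
    fix y assume "y \<in> L0_paste_set M A (\<lambda>k. Bfam M K Q (rs k))"
    then obtain xs where y: "y \<in> L0 M" and xs: "\<And>k. xs k \<in> Bfam M K Q (rs k)" and yx: "L0_aeq M y (L0_paste A xs)"
      unfolding L0_paste_set_def by blast
    have pK: "L0_paste A xs \<in> K" using stable_paste_in[OF K A] xs Bfam_sub by blast
    have yK: "y \<in> K"
      using sat_aeq[OF stable_sat[OF K] pK] y yx unfolding L0_def L0_aeq_def
      by (simp add: eq_commute)
    have "AE \<omega> in M. \<forall>k. Q (xs k \<omega>) (rs k \<omega>) \<omega>"
      using xs unfolding Bfam_def by (subst AE_all_countable) blast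
    moreover have "AE \<omega> in M. y \<omega> = L0_paste A xs \<omega>" using yx unfolding L0_aeq_def .
    ultimately have "AE \<omega> in M. Q (y \<omega>) (L0_paste A rs \<omega>) \<omega>" using AE_space
    proof eventually_elim
      case (elim \<omega>)
      obtain k where k: "\<omega> \<in> A k" using L0_partition_cover[OF A elim(3)] by blast
      show ?case using elim(1,2) L0_paste_eq[OF A k, of xs] L0_paste_eq[OF A k, of rs] by simp
    qed
    then show "y \<in> Bfam M K Q (L0_paste A rs)" using yK unfolding Bfam_def by blast
  qed
  show "Bfam M K Q (L0_paste A rs) \<subseteq> L0_paste_set M A (\<lambda>k. Bfam M K Q (rs k))"
  proof
    fix y assume y: "y \<in> Bfam M K Q (L0_paste A rs)"
    have yK: "y \<in> K" using y Bfam_sub by blast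
    have "\<forall>k. \<exists>x. x \<in> Bfam M K Q (rs k)" using ne by blast
    then obtain w where w: "\<And>k. w k \<in> Bfam M K Q (rs k)" by metis
    have "\<exists>z\<in>K. \<forall>\<omega>\<in>space M. (\<omega> \<in> A k \<longrightarrow> z \<omega> = y \<omega>) \<and> (\<omega> \<notin> A k \<longrightarrow> z \<omega> = w k \<omega>)" for k
      using stable_paste2[OF K yK _ L0_partition_sets[OF A]] w Bfam_sub by blast
    then obtain xs where xsK: "\<And>k. xs k \<in> K"
      and xs: "\<And>k. \<forall>\<omega>\<in>space M. (\<omega> \<in> A k \<longrightarrow> xs k \<omega> = y \<omega>) \<and> (\<omega> \<notin> A k \<longrightarrow> xs k \<omega> = w k \<omega>)"
      by metis
    have xsB: "xs k \<in> Bfam M K Q (rs k)" for k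
    proof -
      have "AE \<omega> in M. Q (y \<omega>) (L0_paste A rs \<omega>) \<omega>" using y unfolding Bfam_def by blast
      moreover have "AE \<omega> in M. Q (w k \<omega>) (rs k \<omega>) \<omega>" using w[of k] unfolding Bfam_def by blast
      ultimately have "AE \<omega> in M. Q (xs k \<omega>) (rs k \<omega>) \<omega>" using AE_space
      proof eventually_elim
        case (elim \<omega>)
        show ?case
        proof (cases "\<omega> \<in> A k")
          case True
          then show ?thesis using elim xs[of k] L0_paste_eq[OF A True, of rs] by simp
        next
          case False
          then show ?thesis using elim xs[of k] by simp
        qed
      qed
      then show ?thesis using xsK unfolding Bfam_def by blast
    qed
    have "\<forall>\<omega>\<in>space M. y \<omega> = L0_paste A xs \<omega>"
    proof
      fix \<omega> assume \<omega>: "\<omega> \<in> space M"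
      obtain k where k: "\<omega> \<in> A k" using L0_partition_cover[OF A \<omega>] by blast
      show "y \<omega> = L0_paste A xs \<omega>" using L0_paste_eq[OF A k, of xs] xs[of k] \<omega> k by simp
    qed
    then have "L0_aeq M y (L0_paste A xs)" unfolding L0_aeq_def by (intro AE_I2) simp
    moreover have "y \<in> L0 M" using stable_meas[OF K yK] unfolding L0_def .
    ultimately show "y \<in> L0_paste_set M A (\<lambda>k. Bfam M K Q (rs k))"
      unfolding L0_paste_set_def using xsB by blast
  qed
qed

definition Bfilter :: "'a measure \<Rightarrow> ('a \<Rightarrow> 'b::euclidean_space) set \<Rightarrow> ('b \<Rightarrow> real \<Rightarrow> 'a \<Rightarrow> bool) \<Rightarrow> ('a \<Rightarrow> real) set \<Rightarrow> ('a \<Rightarrow> 'b) set set" where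
  "Bfilter M K Q R = {G. G \<subseteq> K \<and> L0_saturated M G \<and> (\<exists>r\<in>R. Bfam M K Q r \<subseteq> G)}"

lemma Bfilter_stable:
  fixes K :: "('a \<Rightarrow> 'b::euclidean_space) set"
  assumes K: "L0_stable M K" and Rne: "R \<noteq> {}" and ne: "\<And>r. r \<in> R \<Longrightarrow> Bfam M K Q r \<noteq> {}"
    and Rp: "\<And>A rs. L0_partition M A \<Longrightarrow> (\<And>k. rs k \<in> R) \<Longrightarrow> L0_paste A rs \<in> R"
    and Rint: "\<And>r s. r \<in> R \<Longrightarrow> s \<in> R \<Longrightarrow> \<exists>t\<in>R. Bfam M K Q t \<subseteq> Bfam M K Q r \<inter> Bfam M K Q s"
  shows "L0_stable_filter M K (Bfilter M K Q R)"
  unfolding L0_stable_filter_def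
proof (intro conjI)
  have Ksat: "L0_saturated M K" using stable_sat[OF K] .
  show "L0_filter M K (Bfilter M K Q R)"
    unfolding L0_filter_def
  proof (intro conjI ballI allI impI)
    show "F \<subseteq> K" if "F \<in> Bfilter M K Q R" for F
      using that unfolding Bfilter_def by blast
    show "L0_saturated M F" if "F \<in> Bfilter M K Q R" for F
      using that unfolding Bfilter_def by blast
    show "K \<in> Bfilter M K Q R" using Rne Ksat Bfam_sub unfolding Bfilter_def by blast
    show "{} \<notin> Bfilter M K Q R" using ne unfolding Bfilter_def by blast
    show "G \<in> Bfilter M K Q R" if "F \<in> Bfilter M K Q R" "G \<subseteq> K \<and> L0_saturated M G \<and> F \<subseteq> G" for F G
      using that unfolding Bfilter_def by blast
    fix F G assume F: "F \<in> Bfilter M K Q R" and G: "G \<in> Bfilter M K Q R"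
    obtain r where r: "r \<in> R" "Bfam M K Q r \<subseteq> F" using F unfolding Bfilter_def by blast
    obtain s where s: "s \<in> R" "Bfam M K Q s \<subseteq> G" using G unfolding Bfilter_def by blast
    obtain t where t: "t \<in> R" "Bfam M K Q t \<subseteq> Bfam M K Q r \<inter> Bfam M K Q s" using Rint[OF r(1) s(1)] by blast
    have "L0_saturated M (F \<inter> G)"
      using F G unfolding Bfilter_def L0_saturated_def by blast
    then show "F \<inter> G \<in> Bfilter M K Q R"
      using F G t r s unfolding Bfilter_def by blast
  qed
  show "\<exists>\<B>\<subseteq>Bfilter M K Q R. (\<forall>F\<in>Bfilter M K Q R. \<exists>B\<in>\<B>. B \<subseteq> F) \<and> (\<forall>B\<in>\<B>. L0_stable M B) \<and>
        (\<forall>A Ys. L0_partition M A \<and> (\<forall>k. Ys k \<in> \<B>) \<longrightarrow> L0_paste_set M A Ys \<in> \<B>)"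
  proof (intro exI[of _ "Bfam M K Q ` R"] conjI ballI allI impI)
    show "Bfam M K Q ` R \<subseteq> Bfilter M K Q R"
      using Bfam_sat[OF Ksat] Bfam_sub unfolding Bfilter_def by blast
    show "\<exists>B\<in>Bfam M K Q ` R. B \<subseteq> F" if "F \<in> Bfilter M K Q R" for F
      using that unfolding Bfilter_def by blast
    show "L0_stable M B" if "B \<in> Bfam M K Q ` R" for B
      using that Bfam_stable[OF K] ne by blast
    fix A :: "nat \<Rightarrow> 'a set" and Ys :: "nat \<Rightarrow> ('a \<Rightarrow> 'b) set"
    assume a: "L0_partition M A \<and> (\<forall>k. Ys k \<in> Bfam M K Q ` R)"
    then have A: "L0_partition M A" and "\<forall>k. \<exists>r\<in>R. Ys k = Bfam M K Q r" by auto
    then obtain rs where rs: "\<And>k. rs k \<in> R" "\<And>k. Ys k = Bfam M K Q (rs k)" by metis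
    have "Ys = (\<lambda>k. Bfam M K Q (rs k))" using rs(2) by (intro ext) simp
    moreover have ners: "\<And>k. Bfam M K Q (rs k) \<noteq> {}" using ne rs(1) by blast
    ultimately have eq: "L0_paste_set M A Ys = Bfam M K Q (L0_paste A rs)"
      using Bfam_paste_set[where rs=rs, OF K A ners] by simp
    have "L0_paste A rs \<in> R" using Rp[where rs=rs, OF A rs(1)] .
    then show "L0_paste_set M A Ys \<in> Bfam M K Q ` R" unfolding eq by (rule imageI)
  qed
qed

lemma Bfilter_cluster:
  fixes K :: "('a \<Rightarrow> 'b::euclidean_space) set"
  assumes C: "L0_stable_compact M K" and Rne: "R \<noteq> {}" and ne: "\<And>r. r \<in> R \<Longrightarrow> Bfam M K Q r \<noteq> {}"
    and Rp: "\<And>A rs. L0_partition M A \<Longrightarrow> (\<And>k. rs k \<in> R) \<Longrightarrow> L0_paste A rs \<in> R"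
    and Rint: "\<And>r s. r \<in> R \<Longrightarrow> s \<in> R \<Longrightarrow> \<exists>t\<in>R. Bfam M K Q t \<subseteq> Bfam M K Q r \<inter> Bfam M K Q s"
  shows "\<exists>c\<in>K. \<forall>r\<in>R. \<forall>\<rho>. L0_pos M \<rho> \<longrightarrow> Bfam M K Q r \<inter> L0_ball M c \<rho> \<noteq> {}"
proof -
  have K: "L0_stable M K" using C unfolding L0_stable_compact_def by blast
  have "L0_stable_filter M K (Bfilter M K Q R)" using Bfilter_stable[OF K Rne ne Rp Rint] by blast
  then obtain c where c: "c \<in> K" "L0_cluster M (Bfilter M K Q R) c"
    using C unfolding L0_stable_compact_def by blast
  have Ksat: "L0_saturated M K" using stable_sat[OF K] .
  show ?thesis
  proof (intro bexI[OF _ c(1)] ballI allI impI)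
    fix r \<rho> assume r: "r \<in> R" and \<rho>: "L0_pos M \<rho>"
    have cL: "c \<in> L0 M" using c(2) unfolding L0_cluster_def by blast
    have "Bfam M K Q r \<in> Bfilter M K Q R"
      using r Bfam_sat[OF Ksat] Bfam_sub unfolding Bfilter_def by blast
    then show "Bfam M K Q r \<inter> L0_ball M c \<rho> \<noteq> {}"
      using c(2) L0_ball_open[OF cL \<rho>] L0_ball_center[OF cL \<rho>] unfolding L0_cluster_def by blast
  qed
qed




lemma closed_imp_seq_closed:
  fixes K :: "('a \<Rightarrow> 'b::euclidean_space) set"
  assumes K: "L0_stable M K" and cl: "L0_closed M K"
  shows "L0_seq_closed M K"
  unfolding L0_seq_closed_def
proof (intro allI impI)
  fix xs x assume a: "(\<forall>n. xs n \<in> K) \<and> x \<in> L0 M \<and> (AE \<omega> in M. (\<lambda>n. xs n \<omega>) \<longlonglongrightarrow> x \<omega>)"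
  then have xs: "\<And>n. xs n \<in> K" and x: "x \<in> L0 M" and conv: "AE \<omega> in M. (\<lambda>n. xs n \<omega>) \<longlonglongrightarrow> x \<omega>" by auto
  show "x \<in> K"
  proof (rule ccontr)
    assume "x \<notin> K"
    then have "x \<in> L0 M - K" using x by blast
    then obtain z r where z: "z \<in> L0 M" and r: "L0_pos M r" and xb: "x \<in> L0_ball M z r"
      and sub: "L0_ball M z r \<subseteq> L0 M - K"
      using cl unfolding L0_closed_def L0_open_def by blast
    have zm[measurable]: "z \<in> borel_measurable M" using z unfolding L0_def .
    have rm[measurable]: "r \<in> borel_measurable M" using r unfolding L0_pos_def by blast
    have xsm[measurable]: "xs n \<in> borel_measurable M" for n using stable_meas[OF K xs] .
    define E where "E n = {\<omega>\<in>space M. norm (z \<omega> - xs n \<omega>) < r \<omega>}" for n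
    have Em: "E n \<in> sets M" for n unfolding E_def by measurable
    have xzr: "AE \<omega> in M. norm (z \<omega> - x \<omega>) < r \<omega>" using xb unfolding L0_ball_def by blast
    have cov: "AE \<omega> in M. \<exists>n. \<omega> \<in> E n"
      using conv xzr AE_space
    proof eventually_elim
      case (elim \<omega>)
      have "(\<lambda>n. norm (z \<omega> - xs n \<omega>)) \<longlonglongrightarrow> norm (z \<omega> - x \<omega>)"
        using elim(1) by (intro tendsto_intros)
      then have "\<forall>\<^sub>F n in sequentially. norm (z \<omega> - xs n \<omega>) < r \<omega>"
        using elim(2) by (rule order_tendstoD(2))
      then obtain N where "\<forall>n\<ge>N. norm (z \<omega> - xs n \<omega>) < r \<omega>" unfolding eventually_sequentially by blast
      then have "norm (z \<omega> - xs N \<omega>) < r \<omega>" by blast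
      then show ?case using elim(3) by (auto simp: E_def)
    qed
    obtain y where yK: "y \<in> K" and y: "AE \<omega> in M. \<exists>n. \<omega> \<in> E n \<and> y \<omega> = xs n \<omega>"
      using stable_paste_ae[where xs=xs and E=E, OF K xs Em cov] by (elim bexE)
    have "AE \<omega> in M. norm (z \<omega> - y \<omega>) < r \<omega>" using y by eventually_elim (auto simp: E_def)
    moreover have "y \<in> L0 M" using stable_meas[OF K yK] unfolding L0_def .
    ultimately have "y \<in> L0_ball M z r" unfolding L0_ball_def by blast
    then show False using sub yK by blast
  qed
qed

lemma seq_closed_imp_closed:
  fixes K :: "('a \<Rightarrow> 'b::euclidean_space) set"
  assumes M: "prob_space M" and K: "L0_stable M K" and sc: "L0_seq_closed M K"
  shows "L0_closed M K"
  unfolding L0_closed_def L0_open_def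
proof (intro conjI ballI)
  show "L0 M - K \<subseteq> L0 M" by blast
  fix y assume y: "y \<in> L0 M - K"
  have ym[measurable]: "y \<in> borel_measurable M" using y unfolding L0_def by blast
  define P where "P n v \<omega> = (norm (y \<omega> - v) < 1 / Suc n)" for n :: nat and v :: 'b and \<omega>
  have "\<exists>x0\<in>K. \<forall>x\<in>K. AE \<omega> in M. P n (x \<omega>) \<omega> \<longrightarrow> P n (x0 \<omega>) \<omega>" for n
  proof (rule stable_ess[OF M K])
    fix x assume "x \<in> K"
    then have [measurable]: "x \<in> borel_measurable M" using stable_meas[OF K] by blast
    show "{\<omega> \<in> space M. P n (x \<omega>) \<omega>} \<in> sets M" unfolding P_def by measurable
  qed
  then obtain xs where xsK: "\<And>n. xs n \<in> K" and mx: "\<And>n x. x \<in> K \<Longrightarrow> AE \<omega> in M. P n (x \<omega>) \<omega> \<longrightarrow> P n (xs n \<omega>) \<omega>"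
    by metis
  have xsm[measurable]: "xs n \<in> borel_measurable M" for n using stable_meas[OF K xsK] .
  have "\<exists>n. \<not> (AE \<omega> in M. P n (xs n \<omega>) \<omega>)"
  proof (rule ccontr)
    assume "\<not> (\<exists>n. \<not> (AE \<omega> in M. P n (xs n \<omega>) \<omega>))"
    then have "AE \<omega> in M. \<forall>n. P n (xs n \<omega>) \<omega>" by (subst AE_all_countable) blast
    then have "AE \<omega> in M. (\<lambda>n. xs n \<omega>) \<longlonglongrightarrow> y \<omega>"
    proof eventually_elim
      case (elim \<omega>)
      show ?case by (rule lim_dist_bound) (use elim in \<open>simp add: P_def dist_norm norm_minus_commute\<close>)
    qed
    then have "y \<in> K" using sc xsK y unfolding L0_seq_closed_def by blast
    then show False using y by blast
  qed
  then obtain n where n: "\<not> (AE \<omega> in M. P n (xs n \<omega>) \<omega>)" by blast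
  define r where "r \<omega> = (if P n (xs n \<omega>) \<omega> then 1 else 1 / Suc n)" for \<omega>
  have rpos: "L0_pos M r"
    unfolding L0_pos_def
  proof
    show "r \<in> borel_measurable M" unfolding r_def P_def by measurable
    show "AE \<omega> in M. 0 < r \<omega>" by (intro AE_I2) (simp add: r_def)
  qed
  show "\<exists>x\<in>L0 M. \<exists>r. L0_pos M r \<and> y \<in> L0_ball M x r \<and> L0_ball M x r \<subseteq> L0 M - K"
  proof (intro bexI[of _ y] exI[of _ r] conjI)
    show "y \<in> L0 M" using y by blast
    show "L0_pos M r" by fact
    show "y \<in> L0_ball M y r" using L0_ball_center[OF _ rpos] y by blast
    show "L0_ball M y r \<subseteq> L0 M - K"
    proof
      fix w assume w: "w \<in> L0_ball M y r"
      have "w \<notin> K"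
      proof
        assume wK: "w \<in> K"
        have "AE \<omega> in M. norm (y \<omega> - w \<omega>) < r \<omega>" using w unfolding L0_ball_def by blast
        then have "AE \<omega> in M. P n (xs n \<omega>) \<omega>" using mx[OF wK, of n]
        proof eventually_elim
          case (elim \<omega>)
          show ?case
          proof (cases "P n (xs n \<omega>) \<omega>")
            case False
            then have "P n (w \<omega>) \<omega>" using elim(1) by (simp add: r_def P_def)
            then show ?thesis using elim(2) by blast
          qed
        qed
        then show False using n by blast
      qed
      then show "w \<in> L0 M - K" using w unfolding L0_ball_def by blast
    qed
  qed
qed

lemma L0_pos_paste:
  assumes A: "L0_partition M A" and rs: "\<And>k. L0_pos M (rs k)"
  shows "L0_pos M (L0_paste A rs)"
  unfolding L0_pos_def
proof
  show "L0_paste A rs \<in> borel_measurable M"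
    using L0_paste_meas[OF A] rs unfolding L0_pos_def by blast
  have "AE \<omega> in M. \<forall>k. 0 < rs k \<omega>" using rs unfolding L0_pos_def by (subst AE_all_countable) blast
  then show "AE \<omega> in M. 0 < L0_paste A rs \<omega>" using AE_space
  proof eventually_elim
    case (elim \<omega>)
    obtain k where k: "\<omega> \<in> A k" using L0_partition_cover[OF A elim(2)] by blast
    show ?case using elim(1) L0_paste_eq[OF A k, of rs] by simp
  qed
qed

lemma compact_imp_seq_closed:
  fixes K :: "('a \<Rightarrow> 'b::euclidean_space) set"
  assumes C: "L0_stable_compact M K"
  shows "L0_seq_closed M K"
  unfolding L0_seq_closed_def
proof (intro allI impI)
  have K: "L0_stable M K" using C unfolding L0_stable_compact_def by blast
  fix xs x assume a: "(\<forall>n. xs n \<in> K) \<and> x \<in> L0 M \<and> (AE \<omega> in M. (\<lambda>n. xs n \<omega>) \<longlonglongrightarrow> x \<omega>)"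
  then have xs: "\<And>n. xs n \<in> K" and x: "x \<in> L0 M" and conv: "AE \<omega> in M. (\<lambda>n. xs n \<omega>) \<longlonglongrightarrow> x \<omega>" by auto
  have xm[measurable]: "x \<in> borel_measurable M" using x unfolding L0_def .
  have xsm[measurable]: "xs n \<in> borel_measurable M" for n using stable_meas[OF K xs] .
  define Q where "Q v t \<omega> = (norm (v - x \<omega>) \<le> t)" for v :: 'b and t :: real and \<omega>
  define R where "R = {r. L0_pos M r}"
  have "\<exists>c\<in>K. \<forall>r\<in>R. \<forall>\<rho>. L0_pos M \<rho> \<longrightarrow> Bfam M K Q r \<inter> L0_ball M c \<rho> \<noteq> {}"
  proof (rule Bfilter_cluster[OF C])
    have "(\<lambda>_. 1::real) \<in> R" unfolding R_def L0_pos_def by simp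
    then show "R \<noteq> {}" by blast
  next
    fix r assume "r \<in> R"
    then have r: "L0_pos M r" unfolding R_def by blast
    have rm[measurable]: "r \<in> borel_measurable M" using r unfolding L0_pos_def by blast
    define E where "E n = {\<omega>\<in>space M. norm (xs n \<omega> - x \<omega>) < r \<omega>}" for n
    have Em: "E n \<in> sets M" for n unfolding E_def by measurable
    have "AE \<omega> in M. 0 < r \<omega>" using r unfolding L0_pos_def by blast
    then have cov: "AE \<omega> in M. \<exists>n. \<omega> \<in> E n"
      using conv AE_space
    proof eventually_elim
      case (elim \<omega>)
      have "(\<lambda>n. norm (xs n \<omega> - x \<omega>)) \<longlonglongrightarrow> norm (x \<omega> - x \<omega>)"
        using elim(2) by (intro tendsto_intros)
      then have "\<forall>\<^sub>F n in sequentially. norm (xs n \<omega> - x \<omega>) < r \<omega>"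
        using elim(1) by (intro order_tendstoD(2)) auto
      then obtain N where "\<forall>n\<ge>N. norm (xs n \<omega> - x \<omega>) < r \<omega>" unfolding eventually_sequentially by blast
      then have "norm (xs N \<omega> - x \<omega>) < r \<omega>" by blast
      then show ?case using elim(3) by (auto simp: E_def)
    qed
    obtain y where yK: "y \<in> K" and y: "AE \<omega> in M. \<exists>n. \<omega> \<in> E n \<and> y \<omega> = xs n \<omega>"
      using stable_paste_ae[where xs=xs and E=E, OF K xs Em cov] by (elim bexE)
    have "AE \<omega> in M. Q (y \<omega>) (r \<omega>) \<omega>" using y by eventually_elim (auto simp: E_def Q_def)
    then show "Bfam M K Q r \<noteq> {}" using yK unfolding Bfam_def by blast
  next
    fix A :: "nat \<Rightarrow> 'a set" and rs :: "nat \<Rightarrow> 'a \<Rightarrow> real" assume "L0_partition M A" "\<And>k. rs k \<in> R"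
    then show "L0_paste A rs \<in> R" using L0_pos_paste unfolding R_def by blast
  next
    fix r s assume r: "r \<in> R" and s: "s \<in> R"
    define t where "t \<omega> = min (r \<omega>) (s \<omega>)" for \<omega>
    have "L0_pos M t"
      using r s unfolding R_def L0_pos_def t_def by (auto elim!: AE_mp)
    moreover have "Bfam M K Q t \<subseteq> Bfam M K Q r \<inter> Bfam M K Q s"
      unfolding Bfam_def Q_def t_def by (auto elim!: AE_mp)
    ultimately show "\<exists>t\<in>R. Bfam M K Q t \<subseteq> Bfam M K Q r \<inter> Bfam M K Q s" unfolding R_def by blast
  qed
  then obtain c where cK: "c \<in> K" and c: "\<And>r \<rho>. r \<in> R \<Longrightarrow> L0_pos M \<rho> \<Longrightarrow> Bfam M K Q r \<inter> L0_ball M c \<rho> \<noteq> {}"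
    by blast
  have cm[measurable]: "c \<in> borel_measurable M" using stable_meas[OF K cK] .
  define r where "r \<omega> = (if 0 < norm (c \<omega> - x \<omega>) then norm (c \<omega> - x \<omega>) / 3 else 1)" for \<omega>
  have r: "L0_pos M r"
    unfolding L0_pos_def
  proof
    show "r \<in> borel_measurable M" unfolding r_def by measurable
    show "AE \<omega> in M. 0 < r \<omega>" by (intro AE_I2) (simp add: r_def)
  qed
  obtain y where y1: "y \<in> Bfam M K Q r" and y2: "y \<in> L0_ball M c r"
    using c[of r r] r unfolding R_def by blast
  have "AE \<omega> in M. c \<omega> = x \<omega>"
  proof -
    have "AE \<omega> in M. norm (y \<omega> - x \<omega>) \<le> r \<omega>" using y1 unfolding Bfam_def Q_def by blast
    moreover have "AE \<omega> in M. norm (c \<omega> - y \<omega>) < r \<omega>" using y2 unfolding L0_ball_def by blast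
    ultimately show ?thesis
    proof eventually_elim
      case (elim \<omega>)
      show ?case
      proof (rule ccontr)
        assume ne: "c \<omega> \<noteq> x \<omega>"
        then have pos: "0 < norm (c \<omega> - x \<omega>)" by simp
        have "norm (c \<omega> - x \<omega>) \<le> norm (c \<omega> - y \<omega>) + norm (y \<omega> - x \<omega>)"
          using norm_triangle_ineq[of "c \<omega> - y \<omega>" "y \<omega> - x \<omega>"] by simp
        then show False using elim pos by (simp add: r_def) (smt (verit) norm_ge_zero)
      qed
    qed
  qed
  then show "x \<in> K" using sat_aeq[OF stable_sat[OF K] cK xm] by blast
qed




lemma stable_compact_imp_bounded:
  fixes K :: "('a \<Rightarrow> 'b::euclidean_space) set"
  assumes M: "prob_space M" and C: "L0_stable_compact M K"
  shows "L0_bounded M K"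
proof -
  have K: "L0_stable M K" using C unfolding L0_stable_compact_def by blast
  define P where "P n v \<omega> = (real n \<le> norm (v::'b))" for n :: nat and v and \<omega> :: 'a
  have "\<exists>x0\<in>K. \<forall>x\<in>K. AE \<omega> in M. P n (x \<omega>) \<omega> \<longrightarrow> P n (x0 \<omega>) \<omega>" for n
  proof (rule stable_ess[OF M K])
    fix x assume "x \<in> K"
    then have [measurable]: "x \<in> borel_measurable M" using stable_meas[OF K] by blast
    show "{\<omega> \<in> space M. P n (x \<omega>) \<omega>} \<in> sets M" unfolding P_def by measurable
  qed
  then obtain ys where ysK: "\<And>n. ys n \<in> K" and mx: "\<And>n x. x \<in> K \<Longrightarrow> AE \<omega> in M. P n (x \<omega>) \<omega> \<longrightarrow> P n (ys n \<omega>) \<omega>"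
    by metis
  have ysm[measurable]: "ys n \<in> borel_measurable M" for n using stable_meas[OF K ysK] .
  define E where "E n = {\<omega>\<in>space M. real n \<le> norm (ys n \<omega>)}" for n
  have Em[measurable]: "E n \<in> sets M" for n unfolding E_def by measurable
  define A where "A = (\<Inter>n. E n)"
  have AE: "A \<subseteq> E n" for n unfolding A_def by blast
  \<comment> \<open>A is a null set, by stable compactness\<close>
  define Q where "Q v t \<omega> = (\<omega> \<in> A \<longrightarrow> t \<le> norm (v::'b))" for v t \<omega>
  define R where "R = (borel_measurable M :: ('a \<Rightarrow> real) set)"
  have "\<exists>c\<in>K. \<forall>r\<in>R. \<forall>\<rho>. L0_pos M \<rho> \<longrightarrow> Bfam M K Q r \<inter> L0_ball M c \<rho> \<noteq> {}"
  proof (rule Bfilter_cluster[OF C])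
    have "(\<lambda>_. 1::real) \<in> R" unfolding R_def by simp
    then show "R \<noteq> {}" by blast
  next
    fix r assume "r \<in> R"
    then have rm[measurable]: "r \<in> borel_measurable M" unfolding R_def .
    define F where "F n = {\<omega>\<in>space M. r \<omega> < real n}" for n
    have Fm: "F n \<in> sets M" for n unfolding F_def by measurable
    obtain z where zK: "z \<in> K" and z: "\<forall>\<omega>\<in>space M. (\<exists>n. \<omega> \<in> F n) \<longrightarrow> (\<exists>n. \<omega> \<in> F n \<and> (\<forall>j<n. \<omega> \<notin> F j) \<and> z \<omega> = ys n \<omega>)"
      using stable_paste_first[where xs=ys and E=F, OF K ysK Fm] by (elim bexE)
    have "\<forall>\<omega>\<in>space M. Q (z \<omega>) (r \<omega>) \<omega>"
    proof
      fix \<omega> assume \<omega>: "\<omega> \<in> space M"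
      obtain n where "r \<omega> < real n" using reals_Archimedean2 by blast
      then have "\<exists>n. \<omega> \<in> F n" using \<omega> unfolding F_def by blast
      then obtain n where n: "\<omega> \<in> F n" "z \<omega> = ys n \<omega>" using z \<omega> by meson
      show "Q (z \<omega>) (r \<omega>) \<omega>"
        unfolding Q_def
      proof
        assume "\<omega> \<in> A"
        then have "real n \<le> norm (ys n \<omega>)" using AE[of n] unfolding E_def by blast
        then show "r \<omega> \<le> norm (z \<omega>)" using n unfolding F_def by simp
      qed
    qed
    then have "AE \<omega> in M. Q (z \<omega>) (r \<omega>) \<omega>" by (intro AE_I2) blast
    then show "Bfam M K Q r \<noteq> {}" using zK unfolding Bfam_def by blast
  next
    fix A' :: "nat \<Rightarrow> 'a set" and rs :: "nat \<Rightarrow> 'a \<Rightarrow> real" assume "L0_partition M A'" "\<And>k. rs k \<in> R"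
    then show "L0_paste A' rs \<in> R" using L0_paste_meas unfolding R_def by blast
  next
    fix r s assume r: "r \<in> R" and s: "s \<in> R"
    define t where "t \<omega> = max (r \<omega>) (s \<omega>)" for \<omega>
    have "t \<in> R" using r s unfolding R_def t_def by measurable
    moreover have "Bfam M K Q t \<subseteq> Bfam M K Q r \<inter> Bfam M K Q s"
      unfolding Bfam_def Q_def t_def by (auto elim!: AE_mp)
    ultimately show "\<exists>t\<in>R. Bfam M K Q t \<subseteq> Bfam M K Q r \<inter> Bfam M K Q s" by blast
  qed
  then obtain c where cK: "c \<in> K" and c: "\<And>r \<rho>. r \<in> R \<Longrightarrow> L0_pos M \<rho> \<Longrightarrow> Bfam M K Q r \<inter> L0_ball M c \<rho> \<noteq> {}"
    by blast
  have cm[measurable]: "c \<in> borel_measurable M" using stable_meas[OF K cK] .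
  have one: "L0_pos M (\<lambda>_. 1)" unfolding L0_pos_def by simp
  have "(\<lambda>\<omega>. norm (c \<omega>) + 1) \<in> R" unfolding R_def by measurable
  then obtain y where y1: "y \<in> Bfam M K Q (\<lambda>\<omega>. norm (c \<omega>) + 1)" and y2: "y \<in> L0_ball M c (\<lambda>_. 1)"
    using c one by blast
  have Anull: "AE \<omega> in M. \<omega> \<notin> A"
  proof -
    have "AE \<omega> in M. Q (y \<omega>) (norm (c \<omega>) + 1) \<omega>" using y1 unfolding Bfam_def by blast
    moreover have "AE \<omega> in M. norm (c \<omega> - y \<omega>) < 1" using y2 unfolding L0_ball_def by blast
    ultimately show ?thesis
    proof eventually_elim
      case (elim \<omega>)
      show ?case
      proof
        assume "\<omega> \<in> A"
        then have "norm (c \<omega>) + 1 \<le> norm (y \<omega>)" using elim(1) unfolding Q_def by blast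
        moreover have "norm (y \<omega>) \<le> norm (c \<omega>) + norm (c \<omega> - y \<omega>)"
          using norm_triangle_ineq[of "c \<omega>" "y \<omega> - c \<omega>"] by (simp add: norm_minus_commute)
        ultimately show False using elim(2) by simp
      qed
    qed
  qed
  define G where "G n = space M - E n" for n
  have Gm: "G n \<in> sets M" for n unfolding G_def by measurable
  define bnd :: "'a \<Rightarrow> real" where "bnd = L0_paste (fpart M G) (\<lambda>n \<omega>. real n)"
  have P: "L0_partition M (fpart M G)" using fpart_partition[OF Gm] .
  have bm: "bnd \<in> borel_measurable M" unfolding bnd_def by (rule L0_paste_meas[OF P]) simp
  show ?thesis
    unfolding L0_bounded_def
  proof (intro bexI[OF _ bm] ballI)
    fix x assume xK: "x \<in> K"
    have "AE \<omega> in M. \<forall>n. P n (x \<omega>) \<omega> \<longrightarrow> P n (ys n \<omega>) \<omega>" using mx[OF xK] by (subst AE_all_countable) blast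
    then show "AE \<omega> in M. norm (x \<omega>) \<le> bnd \<omega>" using Anull AE_space
    proof eventually_elim
      case (elim \<omega>)
      have "\<exists>n. \<omega> \<in> G n" using elim(2,3) unfolding A_def G_def by blast
      then have "\<omega> \<in> (\<Union>i. G i)" by blast
      obtain k where k: "\<omega> \<in> fpart M G k" using L0_partition_cover[OF P elim(3)] by blast
      have "\<omega> \<in> G k" using fpart_first[OF k \<open>\<omega> \<in> (\<Union>i. G i)\<close>] by blast
      then have "\<not> P k (ys k \<omega>) \<omega>" unfolding G_def E_def P_def using elim(3) by simp
      then have "\<not> P k (x \<omega>) \<omega>" using elim(1) by blast
      moreover have "bnd \<omega> = real k" unfolding bnd_def using L0_paste_eq[OF P k, of "\<lambda>n \<omega>. real n"] by simp
      ultimately show ?case unfolding P_def by simp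
    qed
  qed
qed




lemma ball_basis_ex:
  "\<exists>p::(nat \<Rightarrow> 'b::euclidean_space) \<times> (nat \<Rightarrow> real). (\<forall>i. 0 < snd p i) \<and>
     (\<forall>v \<epsilon>. 0 < \<epsilon> \<longrightarrow> (\<exists>i. v \<in> ball (fst p i) (snd p i) \<and> cball (fst p i) (snd p i) \<subseteq> ball v \<epsilon>))"
proof -
  obtain D :: "'b set" where D: "countable D" "\<And>X. open X \<Longrightarrow> X \<noteq> {} \<Longrightarrow> \<exists>d\<in>D. d \<in> X"
    using countable_dense_setE by blast
  have Dne: "D \<noteq> {}" using D(2)[of UNIV] by blast
  define cen where "cen i = from_nat_into D (fst (prod_decode i))" for i
  define rad where "rad i = 1 / real (Suc (snd (prod_decode i)))" for i
  have "(\<forall>i. 0 < rad i)" unfolding rad_def by simp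
  moreover have "\<exists>i. v \<in> ball (cen i) (rad i) \<and> cball (cen i) (rad i) \<subseteq> ball v \<epsilon>" if e: "0 < \<epsilon>" for v :: 'b and \<epsilon>
  proof -
    obtain m where m: "inverse (real (Suc m)) < \<epsilon> / 2" using reals_Archimedean[of "\<epsilon>/2"] e by auto
    have o: "open (ball v (1 / real (Suc m)))" and ne: "ball v (1 / real (Suc m)) \<noteq> {}" by auto
    obtain d where d0: "d \<in> D" "d \<in> ball v (1 / real (Suc m))" using D(2)[OF o ne] by blast
    have d: "d \<in> D" "dist v d < 1 / real (Suc m)" using d0 by auto
    obtain k where k: "from_nat_into D k = d" using from_nat_into_surj[OF D(1) d(1)] by blast
    define i where "i = prod_encode (k, m)"
    have ci: "cen i = d" "rad i = 1 / real (Suc m)" unfolding cen_def rad_def i_def using k by simp_all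
    have "v \<in> ball (cen i) (rad i)" using ci d(2) by (simp add: dist_commute)
    moreover have "cball (cen i) (rad i) \<subseteq> ball v \<epsilon>"
    proof
      fix u assume "u \<in> cball (cen i) (rad i)"
      then have "dist d u \<le> 1 / real (Suc m)" using ci by simp
      moreover have "dist v u \<le> dist v d + dist d u" by (rule dist_triangle)
      ultimately show "u \<in> ball v \<epsilon>" using d(2) m by (simp add: inverse_eq_divide)
    qed
    ultimately show ?thesis by blast
  qed
  ultimately show ?thesis by (intro exI[of _ "(cen, rad)"]) auto
qed

definition bpair :: "(nat \<Rightarrow> 'b::euclidean_space) \<times> (nat \<Rightarrow> real)" where
  "bpair = (SOME p. (\<forall>i. 0 < snd p i) \<and>
     (\<forall>v \<epsilon>. 0 < \<epsilon> \<longrightarrow> (\<exists>i. v \<in> ball (fst p i) (snd p i) \<and> cball (fst p i) (snd p i) \<subseteq> ball v \<epsilon>)))"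

definition bcen :: "nat \<Rightarrow> 'b::euclidean_space" where "bcen = fst bpair"
definition brad :: "'b::euclidean_space itself \<Rightarrow> nat \<Rightarrow> real" where "brad T = snd (bpair :: (nat \<Rightarrow> 'b) \<times> _)"

definition bball :: "nat \<Rightarrow> 'b::euclidean_space set" where "bball i = ball (bcen i) (brad TYPE('b) i)"
definition bcball :: "nat \<Rightarrow> 'b::euclidean_space set" where "bcball i = cball (bcen i) (brad TYPE('b) i)"

lemma bbasis: "0 < \<epsilon> \<Longrightarrow> \<exists>i. (v::'b::euclidean_space) \<in> bball i \<and> bcball i \<subseteq> ball v \<epsilon>"
proof -
  assume e: "0 < \<epsilon>"
  have "(\<forall>i. 0 < snd (bpair::(nat \<Rightarrow> 'b) \<times> _) i) \<and>
     (\<forall>v \<epsilon>. 0 < \<epsilon> \<longrightarrow> (\<exists>i. v \<in> ball (fst (bpair::(nat \<Rightarrow> 'b) \<times> _) i) (snd (bpair::(nat \<Rightarrow> 'b) \<times> _) i) \<and> cball (fst (bpair::(nat \<Rightarrow> 'b) \<times> _) i) (snd (bpair::(nat \<Rightarrow> 'b) \<times> _) i) \<subseteq> ball v \<epsilon>))"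
    unfolding bpair_def by (rule someI_ex[OF ball_basis_ex])
  then show ?thesis using e unfolding bball_def bcball_def bcen_def brad_def by blast
qed

lemma bball_open: "open (bball i)" unfolding bball_def by simp
lemma bcball_compact: "compact (bcball i)" unfolding bcball_def by simp
lemma bball_sub: "bball i \<subseteq> bcball i" unfolding bball_def bcball_def by auto

definition erx :: "'a measure \<Rightarrow> ('a \<Rightarrow> 'b::euclidean_space) set \<Rightarrow> nat \<Rightarrow> 'a \<Rightarrow> 'b" where
  "erx M B i = (SOME y. y \<in> B \<and> (\<forall>z\<in>B. AE \<omega> in M. z \<omega> \<in> bball i \<longrightarrow> y \<omega> \<in> bball i))"

lemma erx:
  fixes B :: "('a \<Rightarrow> 'b::euclidean_space) set"
  assumes M: "prob_space M" and B: "L0_stable M B"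
  shows "erx M B i \<in> B \<and> (\<forall>z\<in>B. AE \<omega> in M. z \<omega> \<in> bball i \<longrightarrow> erx M B i \<omega> \<in> bball i)"
proof -
  have "\<exists>x0\<in>B. \<forall>x\<in>B. AE \<omega> in M. x \<omega> \<in> bball i \<longrightarrow> x0 \<omega> \<in> bball i"
  proof (rule stable_ess[OF M B, where P="\<lambda>v \<omega>. v \<in> bball i"])
    fix x assume "x \<in> B"
    then have xm: "x \<in> borel_measurable M" using stable_meas[OF B] by blast
    have "x -` bball i \<inter> space M \<in> sets M" using measurable_sets[OF xm borel_open[OF bball_open]] .
    moreover have "{\<omega> \<in> space M. x \<omega> \<in> bball i} = x -` bball i \<inter> space M" by blast
    ultimately show "{\<omega> \<in> space M. x \<omega> \<in> bball i} \<in> sets M" by simp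
  qed
  then have "\<exists>y. y \<in> B \<and> (\<forall>z\<in>B. AE \<omega> in M. z \<omega> \<in> bball i \<longrightarrow> y \<omega> \<in> bball i)" by blast
  then show ?thesis unfolding erx_def by (rule someI_ex)
qed

lemma erx_in: "prob_space M \<Longrightarrow> L0_stable M B \<Longrightarrow> erx M B i \<in> B"
  using erx by blast

lemma erx_closure:
  fixes B :: "('a \<Rightarrow> 'b::euclidean_space) set"
  assumes M: "prob_space M" and B: "L0_stable M B" and y: "y \<in> B"
  shows "AE \<omega> in M. y \<omega> \<in> closure (range (\<lambda>i. erx M B i \<omega>))"
proof -
  have "AE \<omega> in M. \<forall>i. y \<omega> \<in> bball i \<longrightarrow> erx M B i \<omega> \<in> bball i"
    using erx[OF M B] y by (subst AE_all_countable) blast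
  then show ?thesis
  proof eventually_elim
    case (elim \<omega>)
    show ?case unfolding closure_approachable
    proof (intro allI impI)
      fix \<epsilon> :: real assume e: "0 < \<epsilon>"
      obtain i where i: "y \<omega> \<in> bball i" "bcball i \<subseteq> ball (y \<omega>) \<epsilon>" using bbasis[OF e] by blast
      have "erx M B i \<omega> \<in> ball (y \<omega>) \<epsilon>" using elim i bball_sub by blast
      then show "\<exists>x\<in>range (\<lambda>i. erx M B i \<omega>). dist x (y \<omega>) < \<epsilon>" by (auto simp: dist_commute)
    qed
  qed
qed

lemma closure_range_meas:
  fixes x :: "nat \<Rightarrow> 'a \<Rightarrow> 'b::euclidean_space"
  assumes xm: "\<And>i. x i \<in> borel_measurable M" and U: "open U"
  shows "{\<omega>\<in>space M. closure (range (\<lambda>i. x i \<omega>)) \<inter> U \<noteq> {}} \<in> sets M"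
proof -
  have eq: "{\<omega>\<in>space M. closure (range (\<lambda>i. x i \<omega>)) \<inter> U \<noteq> {}} = (\<Union>i. x i -` U \<inter> space M)"
  proof -
    have "closure (range (\<lambda>i. x i \<omega>)) \<inter> U \<noteq> {} \<longleftrightarrow> (\<exists>i. x i \<omega> \<in> U)" for \<omega>
      using open_Int_closure_eq_empty[OF U, of "range (\<lambda>i. x i \<omega>)"] by (auto simp: Int_commute)
    then show ?thesis by blast
  qed
  have "x i -` U \<inter> space M \<in> sets M" for i using measurable_sets[OF xm U[THEN borel_open]] .
  then have "(\<Union>i. x i -` U \<inter> space M) \<in> sets M" by (intro sets.countable_UN'') auto
  then show ?thesis unfolding eq .
qed

lemma iii_imp_iv:
  fixes K :: "('a \<Rightarrow> 'b::euclidean_space) set"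
  assumes M: "prob_space M" and K: "L0_stable M K" and sc: "L0_seq_closed M K" and bd: "L0_bounded M K"
  shows "\<exists>S. meas_corr M S \<and> nonempty_compact_values M S \<and> K = L0_selectors M S"
proof -
  define x where "x = erx M K"
  have xK: "x i \<in> K" for i unfolding x_def using erx_in[OF M K] .
  have xm[measurable]: "x i \<in> borel_measurable M" for i using stable_meas[OF K xK] .
  obtain r0 where r0m: "r0 \<in> borel_measurable M" and r0: "\<And>y. y \<in> K \<Longrightarrow> AE \<omega> in M. norm (y \<omega>) \<le> r0 \<omega>"
    using bd unfolding L0_bounded_def by blast
  have "AE \<omega> in M. \<forall>i. norm (x i \<omega>) \<le> r0 \<omega>" using r0 xK by (subst AE_all_countable) blast
  then obtain N where N: "\<And>\<omega>. \<omega> \<in> space M - N \<Longrightarrow> \<forall>i. norm (x i \<omega>) \<le> r0 \<omega>" and Nnull: "N \<in> null_sets M"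
    by (rule AE_E3) auto
  have Nm[measurable]: "N \<in> sets M" using Nnull by blast
  have notN: "AE \<omega> in M. \<omega> \<notin> N" using AE_not_in[OF Nnull] .
  define x' where "x' i \<omega> = (if \<omega> \<in> N then 0 else x i \<omega>)" for i \<omega>
  have x'm[measurable]: "x' i \<in> borel_measurable M" for i unfolding x'_def by measurable
  have x'K: "x' i \<in> K" for i
  proof (rule sat_aeq[OF stable_sat[OF K] xK x'm])
    show "AE \<omega> in M. x i \<omega> = x' i \<omega>" using notN by eventually_elim (simp add: x'_def)
  qed
  define S where "S \<omega> = closure (range (\<lambda>i. x' i \<omega>))" for \<omega>
  have Smc: "meas_corr M S" unfolding meas_corr_def S_def
    by (intro allI impI closure_range_meas[where x=x', OF x'm])
  have Sc: "nonempty_compact_values M S" unfolding nonempty_compact_values_def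
  proof (intro ballI conjI)
    fix \<omega> assume \<omega>: "\<omega> \<in> space M"
    show "S \<omega> \<noteq> {}" unfolding S_def by simp
    have "range (\<lambda>i. x' i \<omega>) \<subseteq> cball 0 (max (r0 \<omega>) 0)"
    proof
      fix v assume "v \<in> range (\<lambda>i. x' i \<omega>)"
      then obtain i where v: "v = x' i \<omega>" by blast
      show "v \<in> cball 0 (max (r0 \<omega>) 0)"
      proof (cases "\<omega> \<in> N")
        case True then show ?thesis using v by (simp add: x'_def)
      next
        case False
        then have "norm (x i \<omega>) \<le> r0 \<omega>" using N \<omega> by blast
        then show ?thesis using v False by (simp add: x'_def)
      qed
    qed
    then have "bounded (range (\<lambda>i. x' i \<omega>))" using bounded_cball bounded_subset by blast
    then show "compact (S \<omega>)" unfolding S_def by simp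
  qed
  have "K = L0_selectors M S"
  proof
    show "K \<subseteq> L0_selectors M S"
    proof
      fix y assume yK: "y \<in> K"
      have ym[measurable]: "y \<in> borel_measurable M" using stable_meas[OF K yK] .
      have "AE \<omega> in M. y \<omega> \<in> closure (range (\<lambda>i. x i \<omega>))" unfolding x_def using erx_closure[OF M K yK] .
      then have "AE \<omega> in M. y \<omega> \<in> S \<omega>" using notN
      proof eventually_elim
        case (elim \<omega>)
        have "range (\<lambda>i. x i \<omega>) = range (\<lambda>i. x' i \<omega>)" using elim(2) by (simp add: x'_def)
        then show ?case using elim(1) unfolding S_def by simp
      qed
      then obtain N2 where N2: "\<And>\<omega>. \<omega> \<in> space M - N2 \<Longrightarrow> y \<omega> \<in> S \<omega>" and N2null: "N2 \<in> null_sets M"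
        by (rule AE_E3) auto
      have N2m[measurable]: "N2 \<in> sets M" using N2null by blast
      define z where "z \<omega> = (if \<omega> \<in> N2 then x' 0 \<omega> else y \<omega>)" for \<omega>
      have zm: "z \<in> borel_measurable M" unfolding z_def by measurable
      have zS: "\<forall>\<omega>\<in>space M. z \<omega> \<in> S \<omega>"
      proof
        fix \<omega> assume \<omega>: "\<omega> \<in> space M"
        show "z \<omega> \<in> S \<omega>"
        proof (cases "\<omega> \<in> N2")
          case True
          have "x' 0 \<omega> \<in> range (\<lambda>i. x' i \<omega>)" by blast
          then have "x' 0 \<omega> \<in> closure (range (\<lambda>i. x' i \<omega>))" using closure_subset[of "range (\<lambda>i. x' i \<omega>)"] by blast
          then show ?thesis using True unfolding z_def S_def by simp
        next
          case False then show ?thesis using N2 \<omega> unfolding z_def by simp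
        qed
      qed
      have "L0_aeq M y z" unfolding L0_aeq_def using AE_not_in[OF N2null] by eventually_elim (simp add: z_def)
      then show "y \<in> L0_selectors M S" unfolding L0_selectors_def L0_def using zm zS ym by blast
    qed
    show "L0_selectors M S \<subseteq> K"
    proof
      fix y assume "y \<in> L0_selectors M S"
      then obtain z where y: "y \<in> L0 M" and zm: "z \<in> borel_measurable M" and zS: "\<forall>\<omega>\<in>space M. z \<omega> \<in> S \<omega>"
        and yz: "L0_aeq M y z" unfolding L0_selectors_def by blast
      have "AE \<omega> in M. z \<omega> \<in> closure (range (\<lambda>i. x' i \<omega>))" using zS unfolding S_def by (intro AE_I2) blast
      then have zK: "z \<in> K" using stable_closure_in[where xs=x', OF K sc x'K zm] by blast
      have "AE \<omega> in M. z \<omega> = y \<omega>" using yz unfolding L0_aeq_def by (auto elim: AE_mp)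
      then show "y \<in> K" using sat_aeq[OF stable_sat[OF K] zK] y unfolding L0_def by blast
    qed
  qed
  then show ?thesis using Smc Sc by blast
qed




lemma compact_meet_iff:
  fixes X C :: "'b::euclidean_space set"
  assumes X: "compact X" and C: "closed C" "C \<noteq> {}"
  shows "X \<inter> C \<noteq> {} \<longleftrightarrow> (\<forall>n::nat. \<exists>s\<in>X. infdist s C < 1 / Suc n)"
proof
  assume "X \<inter> C \<noteq> {}"
  then obtain p where p: "p \<in> X" "p \<in> C" by blast
  show "\<forall>n::nat. \<exists>s\<in>X. infdist s C < 1 / Suc n"
  proof (intro allI bexI[OF _ p(1)])
    fix n :: nat show "infdist p C < 1 / Suc n" using p(2) by simp
  qed
next
  assume H: "\<forall>n::nat. \<exists>s\<in>X. infdist s C < 1 / Suc n"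
  then have Xne: "X \<noteq> {}" by blast
  have le: "setdist X C < 1 / Suc n" for n
  proof -
    obtain s where s: "s \<in> X" "infdist s C < 1 / Suc n" using H by blast
    have "setdist X C \<le> setdist {s} C" by (rule setdist_le_sing[OF s(1)])
    then show ?thesis using s(2) by (simp add: infdist_eq_setdist)
  qed
  have "setdist X C \<le> 0"
  proof (rule ccontr)
    assume "\<not> setdist X C \<le> 0"
    then have "0 < setdist X C" by simp
    then obtain n where n: "inverse (real (Suc n)) < setdist X C" using reals_Archimedean by blast
    then show False using le[of n] by (simp add: inverse_eq_divide)
  qed
  then have "setdist X C = 0" using setdist_pos_le[of X C] by linarith
  then show "X \<inter> C \<noteq> {}" using setdist_eq_0_compact_closed[OF X C(1)] Xne C(2) by blast
qed

lemma closure_meet_iff: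
  fixes x :: "nat \<Rightarrow> 'b::euclidean_space" and C :: "'b set"
  assumes X: "bounded (range x)" and C: "closed C" "C \<noteq> {}"
  shows "closure (range x) \<inter> C \<noteq> {} \<longleftrightarrow> (\<forall>n::nat. \<exists>i. infdist (x i) C < 1 / Suc n)"
proof
  assume "closure (range x) \<inter> C \<noteq> {}"
  then obtain p where p: "p \<in> closure (range x)" "p \<in> C" by blast
  show "\<forall>n::nat. \<exists>i. infdist (x i) C < 1 / Suc n"
  proof
    fix n :: nat
    have "0 < 1 / real (Suc n)" by simp
    then obtain y where "y \<in> range x" "dist y p < 1 / Suc n" using p(1) closure_approachable by blast
    then obtain i where "dist (x i) p < 1 / Suc n" by blast
    moreover have "infdist (x i) C \<le> dist (x i) p" using infdist_le[OF p(2)] .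
    ultimately have "infdist (x i) C < 1 / Suc n" by linarith
    then show "\<exists>i. infdist (x i) C < 1 / Suc n" by blast
  qed
next
  assume H: "\<forall>n::nat. \<exists>i. infdist (x i) C < 1 / Suc n"
  have "\<forall>n::nat. \<exists>s\<in>closure (range x). infdist s C < 1 / Suc n"
  proof
    fix n :: nat
    obtain i where i: "infdist (x i) C < 1 / Suc n" using H by blast
    have "x i \<in> closure (range x)" by (rule closure_subset[THEN subsetD]) simp
    then show "\<exists>s\<in>closure (range x). infdist s C < 1 / Suc n" using i by blast
  qed
  then show "closure (range x) \<inter> C \<noteq> {}"
    using compact_meet_iff[of "closure (range x)" C] X C by simp
qed

lemma infdist_open: "open {v::'b::euclidean_space. infdist v C < e}"
  by (rule open_Collect_less) (auto intro!: continuous_intros)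

lemma compact_test:
  fixes S :: "'a \<Rightarrow> 'b::euclidean_space set"
  assumes mc: "meas_corr M S" and nc: "nonempty_compact_values M S" and C: "compact C"
  shows "{\<omega>\<in>space M. S \<omega> \<inter> C \<noteq> {}} \<in> sets M"
proof (cases "C = {}")
  case True then show ?thesis by simp
next
  case False
  have Cc: "closed C" using C compact_imp_closed by blast
  have "{\<omega>\<in>space M. S \<omega> \<inter> C \<noteq> {}} = (\<Inter>n::nat. {\<omega>\<in>space M. S \<omega> \<inter> {v. infdist v C < 1 / Suc n} \<noteq> {}}) \<inter> space M"
  proof -
    have eq: "S \<omega> \<inter> C \<noteq> {} \<longleftrightarrow> (\<forall>n::nat. S \<omega> \<inter> {v. infdist v C < 1 / Suc n} \<noteq> {})" if "\<omega> \<in> space M" for \<omega>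
    proof -
      have cS: "compact (S \<omega>)" using nc that unfolding nonempty_compact_values_def by blast
      have "S \<omega> \<inter> C \<noteq> {} \<longleftrightarrow> (\<forall>n::nat. \<exists>s\<in>S \<omega>. infdist s C < 1 / Suc n)"
        by (rule compact_meet_iff[OF cS Cc False])
      also have "\<dots> \<longleftrightarrow> (\<forall>n::nat. S \<omega> \<inter> {v. infdist v C < 1 / Suc n} \<noteq> {})" by blast
      finally show ?thesis .
    qed
    show ?thesis
    proof (rule set_eqI)
      fix \<omega>
      show "\<omega> \<in> {\<omega>\<in>space M. S \<omega> \<inter> C \<noteq> {}} \<longleftrightarrow> \<omega> \<in> (\<Inter>n::nat. {\<omega>\<in>space M. S \<omega> \<inter> {v. infdist v C < 1 / Suc n} \<noteq> {}}) \<inter> space M"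
        using eq[of \<omega>] by (cases "\<omega> \<in> space M") simp_all
    qed
  qed
  moreover have "{\<omega>\<in>space M. S \<omega> \<inter> {v. infdist v C < 1 / Suc n} \<noteq> {}} \<in> sets M" for n :: nat
    using mc infdist_open unfolding meas_corr_def by blast
  ultimately show ?thesis by auto
qed

lemma infdist_meas[measurable]:
  "f \<in> borel_measurable M \<Longrightarrow> (\<lambda>\<omega>. infdist (f \<omega>) C) \<in> borel_measurable M"
proof -
  assume f: "f \<in> borel_measurable M"
  have "(\<lambda>v. infdist v C) \<in> borel_measurable borel"
    by (rule borel_measurable_continuous_onI) (auto intro!: continuous_intros)
  from measurable_compose[OF f this] show ?thesis by simp
qed

lemma bcen_dense: "0 < \<epsilon> \<Longrightarrow> \<exists>k. dist (bcen k) (v::'b::euclidean_space) < \<epsilon>"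
proof -
  assume e: "0 < \<epsilon>"
  obtain i where i: "v \<in> bball i" "bcball i \<subseteq> ball v \<epsilon>" using bbasis[OF e] by blast
  have "0 \<le> brad TYPE('b) i" using i(1) unfolding bball_def by (smt (verit) mem_ball zero_le_dist)
  then have "(bcen i :: 'b) \<in> bcball i" unfolding bcball_def by simp
  then have "(bcen i :: 'b) \<in> ball v \<epsilon>" using i(2) by blast
  then have "dist (bcen i) v < \<epsilon>" by (simp add: dist_commute)
  then show ?thesis by blast
qed

primrec kseq :: "('a \<Rightarrow> 'b::euclidean_space set) \<Rightarrow> nat \<Rightarrow> 'a \<Rightarrow> nat" where
  "kseq S 0 \<omega> = (LEAST k. S \<omega> \<inter> cball (bcen k) 1 \<noteq> {})"
| "kseq S (Suc n) \<omega> = (LEAST k. dist (bcen k) (bcen (kseq S n \<omega>) :: 'b) < 2 * (1/2)^n \<and> S \<omega> \<inter> cball (bcen k) ((1/2)^(Suc n)) \<noteq> {})"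

lemma kseq_inv:
  fixes S :: "'a \<Rightarrow> 'b::euclidean_space set"
  assumes ne: "S \<omega> \<noteq> {}"
  shows "S \<omega> \<inter> cball (bcen (kseq S n \<omega>)) ((1/2)^n) \<noteq> {} \<and>
         dist (bcen (kseq S (Suc n) \<omega>)) (bcen (kseq S n \<omega>) :: 'b) < 2 * (1/2)^n"
proof (induction n)
  case 0
  obtain s where s: "s \<in> S \<omega>" using ne by blast
  obtain k where "dist (bcen k) s < 1" using bcen_dense[of 1 s] by auto
  then have ex0: "\<exists>k. S \<omega> \<inter> cball (bcen k) 1 \<noteq> {}" using s by (auto intro!: exI[of _ k])
  have inv0: "S \<omega> \<inter> cball (bcen (kseq S 0 \<omega>)) ((1/2)^0) \<noteq> {}"
    using LeastI_ex[OF ex0] by simp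
  then obtain s where s: "s \<in> S \<omega>" "dist (bcen (kseq S 0 \<omega>)) s \<le> 1" by auto
  obtain k where k: "dist (bcen k) s < 1/2" using bcen_dense[of "1/2" s] by auto
  have "dist (bcen k :: 'b) (bcen (kseq S 0 \<omega>)) < 2 * (1/2)^0 \<and> S \<omega> \<inter> cball (bcen k) ((1/2)^(Suc 0)) \<noteq> {}"
  proof
    have "dist (bcen k :: 'b) (bcen (kseq S 0 \<omega>)) \<le> dist (bcen k) s + dist s (bcen (kseq S 0 \<omega>))" by (metis dist_triangle)
    then show "dist (bcen k :: 'b) (bcen (kseq S 0 \<omega>)) < 2 * (1/2)^0" using k s(2) by (simp add: dist_commute)
    show "S \<omega> \<inter> cball (bcen k) ((1/2)^(Suc 0)) \<noteq> {}" using k s(1) by (auto intro!: less_imp_le)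
  qed
  then have "dist (bcen (kseq S (Suc 0) \<omega>)) (bcen (kseq S 0 \<omega>) :: 'b) < 2 * (1/2)^0"
    unfolding kseq.simps by (rule LeastI2_ex[OF exI]) auto
  then show ?case using inv0 by simp
next
  case (Suc n)
  let ?P = "\<lambda>n k. dist (bcen k) (bcen (kseq S n \<omega>) :: 'b) < 2 * (1/2)^n \<and> S \<omega> \<inter> cball (bcen k) ((1/2)^(Suc n)) \<noteq> {}"
  have ex: "\<exists>k. ?P m k" if inv: "S \<omega> \<inter> cball (bcen (kseq S m \<omega>)) ((1/2)^m) \<noteq> {}" for m
  proof -
    obtain s where s: "s \<in> S \<omega>" "dist (bcen (kseq S m \<omega>)) s \<le> (1/2)^m" using inv by auto
    have "0 < ((1::real)/2)^(Suc m)" by simp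
    then obtain k where k: "dist (bcen k) s < (1/2)^(Suc m)" using bcen_dense[of _ s] by blast
    have "dist (bcen k :: 'b) (bcen (kseq S m \<omega>)) \<le> dist (bcen k) s + dist s (bcen (kseq S m \<omega>))" by (metis dist_triangle)
    moreover have "0 \<le> ((1::real)/2)^m" by simp
    moreover have "dist (bcen k :: 'b) s < (1/2)^m / 2" using k by simp
    moreover have "dist s (bcen (kseq S m \<omega>) :: 'b) \<le> (1/2)^m" using s(2) by (simp add: dist_commute)
    ultimately have "dist (bcen k :: 'b) (bcen (kseq S m \<omega>)) < 2 * (1/2)^m" by linarith
    moreover have "S \<omega> \<inter> cball (bcen k) ((1/2)^(Suc m)) \<noteq> {}" using k s(1) by (auto intro!: less_imp_le)
    ultimately show ?thesis by blast
  qed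
  have inv1: "S \<omega> \<inter> cball (bcen (kseq S (Suc n) \<omega>)) ((1/2)^(Suc n)) \<noteq> {}"
    using LeastI_ex[OF ex[OF Suc.IH[THEN conjunct1]]] by simp
  have "?P (Suc n) (kseq S (Suc (Suc n)) \<omega>)"
    using LeastI_ex[OF ex[OF inv1]] by simp
  then show ?case using inv1 by simp
qed

lemma kseq_meas:
  fixes S :: "'a \<Rightarrow> 'b::euclidean_space set"
  assumes ct: "\<And>c t. {\<omega>\<in>space M. S \<omega> \<inter> cball c t \<noteq> {}} \<in> sets M"
  shows "kseq S n \<in> measurable M (count_space UNIV)"
proof (induction n)
  have p: "(\<lambda>\<omega>. S \<omega> \<inter> cball c t \<noteq> {}) \<in> measurable M (count_space UNIV)" for c t
    using ct[of c t] unfolding pred_def[symmetric] .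
  case 0
  show ?case unfolding kseq.simps by (rule measurable_Least) (rule p)
next
  have p: "(\<lambda>\<omega>. S \<omega> \<inter> cball c t \<noteq> {}) \<in> measurable M (count_space UNIV)" for c t
    using ct[of c t] unfolding pred_def[symmetric] .
  case (Suc n)
  have q: "(\<lambda>\<omega>. dist (bcen k) (bcen (kseq S n \<omega>) :: 'b) < 2 * (1/2)^n) \<in> measurable M (count_space UNIV)" for k
    by (rule measurable_compose[OF Suc.IH]) simp
  show ?case unfolding kseq.simps
    by (rule measurable_Least) (intro pred_intros_logic q p)
qed

lemma krn_select:
  fixes S :: "'a \<Rightarrow> 'b::euclidean_space set"
  assumes ne: "\<And>\<omega>. \<omega> \<in> space M \<Longrightarrow> S \<omega> \<noteq> {}" and cl: "\<And>\<omega>. \<omega> \<in> space M \<Longrightarrow> closed (S \<omega>)"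
    and ct: "\<And>c t. {\<omega>\<in>space M. S \<omega> \<inter> cball c t \<noteq> {}} \<in> sets M"
  shows "\<exists>y\<in>borel_measurable M. \<forall>\<omega>\<in>space M. y \<omega> \<in> S \<omega>"
proof -
  define f where "f n \<omega> = (bcen (kseq S n \<omega>) :: 'b)" for n \<omega>
  have fm: "f n \<in> borel_measurable M" for n
    unfolding f_def by (rule measurable_compose[OF kseq_meas[OF ct]]) simp
  have conv: "convergent (\<lambda>n. f n \<omega>)" if \<omega>: "\<omega> \<in> space M" for \<omega>
  proof -
    define D where "D j = f (Suc j) \<omega> - f j \<omega>" for j
    have nD: "norm (D j) \<le> 2 * (1/2)^j" for j
      using kseq_inv[where S=S and \<omega>=\<omega> and n=j, OF ne[OF \<omega>]] unfolding D_def f_def by (simp add: dist_norm less_imp_le)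
    have "summable (\<lambda>j. 2 * ((1::real)/2)^j)" by (intro summable_mult summable_geometric) simp
    then have "summable (\<lambda>j. norm (D j))"
      by (rule summable_comparison_test[rotated]) (intro exI[of _ 0] allI impI, simp add: nD)
    then have "summable D" by (rule summable_norm_cancel)
    then have "(\<lambda>n. \<Sum>j<n. D j) \<longlonglongrightarrow> suminf D" by (rule summable_LIMSEQ)
    moreover have "(\<Sum>j<n. D j) = f n \<omega> - f 0 \<omega>" for n unfolding D_def by (rule sum_lessThan_telescope)
    ultimately have "(\<lambda>n. f n \<omega> - f 0 \<omega>) \<longlonglongrightarrow> suminf D" by simp
    then have "(\<lambda>n. (f n \<omega> - f 0 \<omega>) + f 0 \<omega>) \<longlonglongrightarrow> suminf D + f 0 \<omega>" by (intro tendsto_intros)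
    then show ?thesis unfolding convergent_def by auto
  qed
  define g where "g \<omega> = lim (\<lambda>n. f n \<omega>)" for \<omega>
  have lim: "(\<lambda>n. f n \<omega>) \<longlonglongrightarrow> g \<omega>" if "\<omega> \<in> space M" for \<omega>
    using conv[OF that] unfolding g_def by (rule convergent_LIMSEQ_iff[THEN iffD1])
  have gm: "g \<in> borel_measurable M" by (rule borel_measurable_LIMSEQ_metric[OF fm lim])
  have gS: "g \<omega> \<in> S \<omega>" if \<omega>: "\<omega> \<in> space M" for \<omega>
  proof -
    have "g \<omega> \<in> closure (S \<omega>)"
      unfolding closure_approachable
    proof (intro allI impI)
      fix \<epsilon> :: real assume e: "0 < \<epsilon>"
      have "\<forall>\<^sub>F n in sequentially. dist (f n \<omega>) (g \<omega>) < \<epsilon> / 2"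
        using lim[OF \<omega>] e by (intro tendstoD) auto
      moreover have "\<forall>\<^sub>F n in sequentially. ((1::real)/2)^n < \<epsilon> / 2"
        using LIMSEQ_realpow_zero[of "1/2::real"] e by (intro order_tendstoD(2)) auto
      ultimately have "\<forall>\<^sub>F n in sequentially. dist (f n \<omega>) (g \<omega>) < \<epsilon> / 2 \<and> ((1::real)/2)^n < \<epsilon> / 2"
        by (rule eventually_conj)
      then obtain n where n: "dist (f n \<omega>) (g \<omega>) < \<epsilon> / 2" "((1::real)/2)^n < \<epsilon> / 2"
        unfolding eventually_sequentially by blast
      obtain s where s: "s \<in> S \<omega>" "dist (f n \<omega>) s \<le> (1/2)^n"
        using kseq_inv[where S=S and \<omega>=\<omega> and n=n, OF ne[OF \<omega>]] unfolding f_def by auto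
      have "dist s (g \<omega>) \<le> dist s (f n \<omega>) + dist (f n \<omega>) (g \<omega>)" by (rule dist_triangle)
      then have "dist s (g \<omega>) < \<epsilon>" using n s(2) by (simp add: dist_commute)
      then show "\<exists>s\<in>S \<omega>. dist s (g \<omega>) < \<epsilon>" using s(1) by blast
    qed
    then show ?thesis using cl[OF \<omega>] by simp
  qed
  show ?thesis using gm gS by blast
qed




lemma cball_test:
  fixes S :: "'a \<Rightarrow> 'b::euclidean_space set"
  assumes mc: "meas_corr M S" and nc: "nonempty_compact_values M S"
  shows "{\<omega>\<in>space M. S \<omega> \<inter> cball c t \<noteq> {}} \<in> sets M"
  using compact_test[OF mc nc] by simp

lemma sel_exists:
  fixes S :: "'a \<Rightarrow> 'b::euclidean_space set"
  assumes mc: "meas_corr M S" and nc: "nonempty_compact_values M S"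
  shows "\<exists>y\<in>borel_measurable M. \<forall>\<omega>\<in>space M. y \<omega> \<in> S \<omega>"
proof (rule krn_select)
  show "S \<omega> \<noteq> {}" if "\<omega> \<in> space M" for \<omega> using nc that unfolding nonempty_compact_values_def by blast
  show "closed (S \<omega>)" if "\<omega> \<in> space M" for \<omega>
    using nc that compact_imp_closed unfolding nonempty_compact_values_def by blast
  show "{\<omega> \<in> space M. S \<omega> \<inter> cball c t \<noteq> {}} \<in> sets M" for c t by (rule cball_test[OF mc nc])
qed

lemma iv_imp_iii:
  fixes S :: "'a \<Rightarrow> 'b::euclidean_space set"
  assumes mc: "meas_corr M S" and nc: "nonempty_compact_values M S"
  shows "L0_stable M (L0_selectors M S) \<and> L0_seq_closed M (L0_selectors M S) \<and> L0_bounded M (L0_selectors M S)"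
proof (intro conjI)
  let ?K = "L0_selectors M S"
  have nc': "\<And>\<omega>. \<omega> \<in> space M \<Longrightarrow> S \<omega> \<noteq> {} \<and> compact (S \<omega>)" using nc unfolding nonempty_compact_values_def by blast
  obtain y0 where y0m: "y0 \<in> borel_measurable M" and y0: "\<forall>\<omega>\<in>space M. y0 \<omega> \<in> S \<omega>"
    using sel_exists[OF mc nc] by blast
  have selI: "y \<in> ?K" if "y \<in> borel_measurable M" "z \<in> borel_measurable M" "\<forall>\<omega>\<in>space M. z \<omega> \<in> S \<omega>" "AE \<omega> in M. y \<omega> = z \<omega>" for y z
    using that unfolding L0_selectors_def L0_def L0_aeq_def by blast
  have selD: "\<exists>z\<in>borel_measurable M. (\<forall>\<omega>\<in>space M. z \<omega> \<in> S \<omega>) \<and> (AE \<omega> in M. y \<omega> = z \<omega>)" if "y \<in> ?K" for y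
    using that unfolding L0_selectors_def L0_aeq_def by blast
  have selM: "y \<in> borel_measurable M" if "y \<in> ?K" for y
    using that unfolding L0_selectors_def L0_def by blast
  show stab: "L0_stable M ?K"
    unfolding L0_stable_def
  proof (intro conjI allI impI)
    show "L0_saturated M ?K"
      unfolding L0_saturated_def
    proof (intro conjI ballI impI)
      show "?K \<subseteq> L0 M" unfolding L0_selectors_def by blast
      fix f g assume f: "f \<in> ?K" and g: "g \<in> L0 M" and fg: "L0_aeq M f g"
      obtain z where z: "z \<in> borel_measurable M" "\<forall>\<omega>\<in>space M. z \<omega> \<in> S \<omega>" "AE \<omega> in M. f \<omega> = z \<omega>"
        using selD[OF f] by blast
      have "AE \<omega> in M. g \<omega> = z \<omega>" using z(3) fg unfolding L0_aeq_def by eventually_elim simp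
      then show "g \<in> ?K" using selI[OF _ z(1,2)] g unfolding L0_def by blast
    qed
    show "?K \<noteq> {}" using selI[OF y0m y0m y0] by blast
    fix A :: "nat \<Rightarrow> 'a set" and xs :: "nat \<Rightarrow> 'a \<Rightarrow> 'b"
    assume a: "L0_partition M A \<and> (\<forall>k. xs k \<in> ?K)"
    then have A: "L0_partition M A" and xs: "\<And>k. xs k \<in> ?K" by auto
    obtain zs where zs: "\<And>k. zs k \<in> borel_measurable M" "\<And>k. \<forall>\<omega>\<in>space M. zs k \<omega> \<in> S \<omega>" "\<And>k. AE \<omega> in M. xs k \<omega> = zs k \<omega>"
      using selD[OF xs] by metis
    have pm: "L0_paste A xs \<in> borel_measurable M" using L0_paste_meas[OF A] selM[OF xs] by blast
    have zm: "L0_paste A zs \<in> borel_measurable M" using L0_paste_meas[OF A] zs(1) by blast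
    have zS: "\<forall>\<omega>\<in>space M. L0_paste A zs \<omega> \<in> S \<omega>"
    proof
      fix \<omega> assume \<omega>: "\<omega> \<in> space M"
      obtain k where k: "\<omega> \<in> A k" using L0_partition_cover[OF A \<omega>] by blast
      show "L0_paste A zs \<omega> \<in> S \<omega>" using L0_paste_eq[OF A k, of zs] zs(2)[of k] \<omega> by simp
    qed
    have "AE \<omega> in M. \<forall>k. xs k \<omega> = zs k \<omega>" using zs(3) by (subst AE_all_countable) blast
    then have "AE \<omega> in M. L0_paste A xs \<omega> = L0_paste A zs \<omega>" using AE_space
    proof eventually_elim
      case (elim \<omega>)
      obtain k where k: "\<omega> \<in> A k" using L0_partition_cover[OF A elim(2)] by blast
      show ?case using elim(1) L0_paste_eq[OF A k, of zs] L0_paste_eq[OF A k, of xs] by simp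
    qed
    then show "L0_paste A xs \<in> ?K" using selI[OF pm zm zS] by blast
  qed
  show "L0_seq_closed M ?K"
    unfolding L0_seq_closed_def
  proof (intro allI impI)
    fix xs x assume a: "(\<forall>n. xs n \<in> ?K) \<and> x \<in> L0 M \<and> (AE \<omega> in M. (\<lambda>n. xs n \<omega>) \<longlonglongrightarrow> x \<omega>)"
    then have xs: "\<And>n. xs n \<in> ?K" and x: "x \<in> L0 M" and conv: "AE \<omega> in M. (\<lambda>n. xs n \<omega>) \<longlonglongrightarrow> x \<omega>" by auto
    have xm[measurable]: "x \<in> borel_measurable M" using x unfolding L0_def .
    obtain zs where zs: "\<And>k. zs k \<in> borel_measurable M" "\<And>k. \<forall>\<omega>\<in>space M. zs k \<omega> \<in> S \<omega>" "\<And>k. AE \<omega> in M. xs k \<omega> = zs k \<omega>"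
      using selD[OF xs] by metis
    have "AE \<omega> in M. \<forall>k. xs k \<omega> = zs k \<omega>" using zs(3) by (subst AE_all_countable) blast
    then have "AE \<omega> in M. x \<omega> \<in> S \<omega>" using conv AE_space
    proof eventually_elim
      case (elim \<omega>)
      have lim: "(\<lambda>n. zs n \<omega>) \<longlonglongrightarrow> x \<omega>" using elim(1,2) by simp
      have mem: "\<forall>n. zs n \<omega> \<in> S \<omega>" using zs(2) elim(3) by blast
      have cl: "closed (S \<omega>)" using nc'[OF elim(3)] compact_imp_closed by blast
      show ?case using closed_sequential_limits[THEN iffD1, OF cl, rule_format, of "\<lambda>n. zs n \<omega>" "x \<omega>"] lim mem by blast
    qed
    then obtain N where N: "\<And>\<omega>. \<omega> \<in> space M - N \<Longrightarrow> x \<omega> \<in> S \<omega>" and Nnull: "N \<in> null_sets M"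
      by (rule AE_E3) auto
    have Nm[measurable]: "N \<in> sets M" using Nnull by blast
    note y0m[measurable]
    define z where "z \<omega> = (if \<omega> \<in> N then y0 \<omega> else x \<omega>)" for \<omega>
    have zm: "z \<in> borel_measurable M" unfolding z_def by measurable
    have zS: "\<forall>\<omega>\<in>space M. z \<omega> \<in> S \<omega>" using N y0 unfolding z_def by auto
    have "AE \<omega> in M. x \<omega> = z \<omega>" using AE_not_in[OF Nnull] by eventually_elim (simp add: z_def)
    then show "x \<in> ?K" using selI[OF xm zm zS] by blast
  qed
  show "L0_bounded M ?K"
    unfolding L0_bounded_def
  proof
    define bnd where "bnd \<omega> = Sup (norm ` S \<omega>)" for \<omega>
    have bdd: "bdd_above (norm ` S \<omega>)" if "\<omega> \<in> space M" for \<omega>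
      using compact_imp_bounded[of "S \<omega>"] nc'[OF that] by (simp add: bdd_above_norm)
    have eq: "{\<omega>\<in>space M. a < bnd \<omega>} = {\<omega>\<in>space M. S \<omega> \<inter> {v. a < norm v} \<noteq> {}}" for a
    proof (rule set_eqI)
      fix \<omega>
      show "\<omega> \<in> {\<omega>\<in>space M. a < bnd \<omega>} \<longleftrightarrow> \<omega> \<in> {\<omega>\<in>space M. S \<omega> \<inter> {v. a < norm v} \<noteq> {}}"
      proof (cases "\<omega> \<in> space M")
        case True
        have "a < bnd \<omega> \<longleftrightarrow> (\<exists>r\<in>norm ` S \<omega>. a < r)"
          unfolding bnd_def using nc'[OF True] bdd[OF True] by (intro less_cSup_iff) auto
        also have "\<dots> \<longleftrightarrow> S \<omega> \<inter> {v. a < norm v} \<noteq> {}" by blast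
        finally show ?thesis using True by simp
      qed simp
    qed
    have op: "open {v::'b. a < norm v}" for a by (rule open_Collect_less) (auto intro!: continuous_intros)
    show "bnd \<in> borel_measurable M"
      unfolding borel_measurable_iff_greater eq using mc op unfolding meas_corr_def by blast
    show "\<forall>x\<in>?K. AE \<omega> in M. norm (x \<omega>) \<le> bnd \<omega>"
    proof
      fix x assume "x \<in> ?K"
      then obtain z where z: "\<forall>\<omega>\<in>space M. z \<omega> \<in> S \<omega>" "AE \<omega> in M. x \<omega> = z \<omega>" using selD by blast
      show "AE \<omega> in M. norm (x \<omega>) \<le> bnd \<omega>" using z(2) AE_space
      proof eventually_elim
        case (elim \<omega>)
        have "norm (z \<omega>) \<le> bnd \<omega>" unfolding bnd_def using z(1) elim(2) bdd[OF elim(2)]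
          by (intro cSup_upper) auto
        then show ?case using elim(1) by simp
      qed
    qed
  qed
qed

lemma selectors_sub:
  fixes S S' :: "'a \<Rightarrow> 'b::euclidean_space set"
  assumes mc: "meas_corr M S" and nc: "nonempty_compact_values M S"
    and mc': "meas_corr M S'" and nc': "nonempty_compact_values M S'"
    and sub: "L0_selectors M S \<subseteq> L0_selectors M S'"
  shows "AE \<omega> in M. S \<omega> \<subseteq> S' \<omega>"
proof -
  have ncS: "\<And>\<omega>. \<omega> \<in> space M \<Longrightarrow> S \<omega> \<noteq> {} \<and> compact (S \<omega>)" using nc unfolding nonempty_compact_values_def by blast
  have ncS': "\<And>\<omega>. \<omega> \<in> space M \<Longrightarrow> S' \<omega> \<noteq> {} \<and> compact (S' \<omega>)" using nc' unfolding nonempty_compact_values_def by blast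
  have "\<exists>y\<in>borel_measurable M. \<forall>\<omega>\<in>space M. (S \<omega> \<inter> bcball i \<noteq> {} \<longrightarrow> y \<omega> \<in> S \<omega> \<inter> bcball i) \<and> y \<omega> \<in> S \<omega>" for i
  proof -
    define N where "N = {\<omega>\<in>space M. S \<omega> \<inter> bcball i \<noteq> {}}"
    have Nm: "N \<in> sets M" unfolding N_def using compact_test[OF mc nc bcball_compact] .
    define Si where "Si \<omega> = (if \<omega> \<in> N then S \<omega> \<inter> bcball i else S \<omega>)" for \<omega>
    have "\<exists>y\<in>borel_measurable M. \<forall>\<omega>\<in>space M. y \<omega> \<in> Si \<omega>"
    proof (rule krn_select)
      show "Si \<omega> \<noteq> {}" if "\<omega> \<in> space M" for \<omega> using ncS[OF that] unfolding Si_def N_def by auto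
      show "closed (Si \<omega>)" if "\<omega> \<in> space M" for \<omega>
        using ncS[OF that] compact_imp_closed bcball_compact unfolding Si_def by auto
      fix c t
      have "{\<omega> \<in> space M. Si \<omega> \<inter> cball c t \<noteq> {}} =
        (N \<inter> {\<omega> \<in> space M. S \<omega> \<inter> (bcball i \<inter> cball c t) \<noteq> {}}) \<union> ((space M - N) \<inter> {\<omega> \<in> space M. S \<omega> \<inter> cball c t \<noteq> {}})"
        unfolding Si_def by (auto simp: Int_assoc)
      moreover have "{\<omega> \<in> space M. S \<omega> \<inter> (bcball i \<inter> cball c t) \<noteq> {}} \<in> sets M"
        using compact_test[OF mc nc compact_Int_closed[OF bcball_compact closed_cball]] .
      moreover have "{\<omega> \<in> space M. S \<omega> \<inter> cball c t \<noteq> {}} \<in> sets M" using cball_test[OF mc nc] .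
      ultimately show "{\<omega> \<in> space M. Si \<omega> \<inter> cball c t \<noteq> {}} \<in> sets M" using Nm by auto
    qed
    then show ?thesis unfolding Si_def N_def by (auto split: if_splits)
  qed
  then obtain ys where ysm: "\<And>i. ys i \<in> borel_measurable M"
    and ys: "\<And>i. \<forall>\<omega>\<in>space M. (S \<omega> \<inter> bcball i \<noteq> {} \<longrightarrow> ys i \<omega> \<in> S \<omega> \<inter> bcball i) \<and> ys i \<omega> \<in> S \<omega>"
    by metis
  have "AE \<omega> in M. ys i \<omega> \<in> S' \<omega>" for i
  proof -
    have "ys i \<in> L0_selectors M S"
      using ysm[of i] ys[of i] unfolding L0_selectors_def L0_def L0_aeq_def by auto
    then have "ys i \<in> L0_selectors M S'" using sub by blast
    then obtain z where z: "\<forall>\<omega>\<in>space M. z \<omega> \<in> S' \<omega>" "AE \<omega> in M. ys i \<omega> = z \<omega>"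
      unfolding L0_selectors_def L0_aeq_def by blast
    show ?thesis using z(2) AE_space by eventually_elim (use z(1) in auto)
  qed
  then have "AE \<omega> in M. \<forall>i. ys i \<omega> \<in> S' \<omega>" by (subst AE_all_countable) blast
  then show ?thesis using AE_space
  proof eventually_elim
    case (elim \<omega>)
    show ?case
    proof
      fix v assume v: "v \<in> S \<omega>"
      have "v \<in> closure (S' \<omega>)"
        unfolding closure_approachable
      proof (intro allI impI)
        fix \<epsilon> :: real assume e: "0 < \<epsilon>"
        obtain i where i: "v \<in> bball i" "bcball i \<subseteq> ball v \<epsilon>" using bbasis[OF e] by blast
        have "S \<omega> \<inter> bcball i \<noteq> {}" using v i(1) bball_sub by blast
        then have "ys i \<omega> \<in> bcball i" using ys[of i] elim(2) by blast
        then have "dist v (ys i \<omega>) < \<epsilon>" using i(2) by auto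
        then show "\<exists>s\<in>S' \<omega>. dist s v < \<epsilon>" using elim(1) by (auto simp: dist_commute)
      qed
      then show "v \<in> S' \<omega>" using ncS'[OF elim(2)] compact_imp_closed closure_closed by metis
    qed
  qed
qed

lemma selectors_unique:
  fixes S S' :: "'a \<Rightarrow> 'b::euclidean_space set"
  assumes mc: "meas_corr M S" and nc: "nonempty_compact_values M S"
    and mc': "meas_corr M S'" and nc': "nonempty_compact_values M S'"
    and eq: "L0_selectors M S = L0_selectors M S'"
  shows "AE \<omega> in M. S \<omega> = S' \<omega>"
proof -
  have "AE \<omega> in M. S \<omega> \<subseteq> S' \<omega>" using selectors_sub[OF mc nc mc' nc'] eq by blast
  moreover have "AE \<omega> in M. S' \<omega> \<subseteq> S \<omega>" using selectors_sub[OF mc' nc' mc nc] eq by blast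
  ultimately show ?thesis by eventually_elim blast
qed




definition ER :: "'a measure \<Rightarrow> ('a \<Rightarrow> 'b::euclidean_space) set \<Rightarrow> 'a \<Rightarrow> 'b set" where
  "ER M B \<omega> = closure (range (\<lambda>i. erx M B i \<omega>))"

definition Nset :: "'a measure \<Rightarrow> ('a \<Rightarrow> 'b::euclidean_space) set \<Rightarrow> nat \<Rightarrow> 'a set" where
  "Nset M B j = {\<omega>\<in>space M. ER M B \<omega> \<inter> bball j = {}}"

lemma ER_mem: "prob_space M \<Longrightarrow> L0_stable M B \<Longrightarrow> y \<in> B \<Longrightarrow> AE \<omega> in M. y \<omega> \<in> ER M B \<omega>"
  unfolding ER_def by (rule erx_closure)

lemma ER_sub_closed:
  assumes "\<forall>i. erx M B i \<omega> \<in> X" "closed X"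
  shows "ER M B \<omega> \<subseteq> X"
  unfolding ER_def using assms closure_minimal[of "range (\<lambda>i. erx M B i \<omega>)" X] by blast

lemma ER_mono:
  fixes B B' :: "('a \<Rightarrow> 'b::euclidean_space) set"
  assumes M: "prob_space M" and B: "L0_stable M B" and B': "L0_stable M B'" and sub: "B \<subseteq> B'"
  shows "AE \<omega> in M. ER M B \<omega> \<subseteq> ER M B' \<omega>"
proof -
  have "AE \<omega> in M. erx M B i \<omega> \<in> ER M B' \<omega>" for i
    using ER_mem[OF M B'] erx_in[OF M B] sub by blast
  then have "AE \<omega> in M. \<forall>i. erx M B i \<omega> \<in> ER M B' \<omega>" by (subst AE_all_countable) blast
  then show ?thesis
  proof eventually_elim
    case (elim \<omega>)
    show ?case by (rule ER_sub_closed[OF elim]) (simp add: ER_def)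
  qed
qed

lemma ER_paste:
  fixes Ys :: "nat \<Rightarrow> ('a \<Rightarrow> 'b::euclidean_space) set"
  assumes M: "prob_space M" and A: "L0_partition M A" and Ys: "\<And>k. L0_stable M (Ys k)"
    and P: "L0_stable M (L0_paste_set M A Ys)"
  shows "AE \<omega> in M. \<forall>k. \<omega> \<in> A k \<longrightarrow> ER M (L0_paste_set M A Ys) \<omega> \<subseteq> ER M (Ys k) \<omega>"
proof -
  let ?B = "L0_paste_set M A Ys"
  have "AE \<omega> in M. \<forall>k. \<omega> \<in> A k \<longrightarrow> erx M ?B i \<omega> \<in> ER M (Ys k) \<omega>" for i
  proof -
    have "erx M ?B i \<in> ?B" using erx_in[OF M P] .
    then obtain xs where xs: "\<And>k. xs k \<in> Ys k" and eq: "L0_aeq M (erx M ?B i) (L0_paste A xs)"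
      unfolding L0_paste_set_def by blast
    have "AE \<omega> in M. \<forall>k. xs k \<omega> \<in> ER M (Ys k) \<omega>"
      using ER_mem[OF M Ys xs] by (subst AE_all_countable) blast
    then show ?thesis using eq unfolding L0_aeq_def
    proof eventually_elim
      case (elim \<omega>)
      show ?case using elim L0_paste_eq[OF A, of \<omega> _ xs] by auto
    qed
  qed
  then have "AE \<omega> in M. \<forall>i k. \<omega> \<in> A k \<longrightarrow> erx M ?B i \<omega> \<in> ER M (Ys k) \<omega>" by (subst AE_all_countable) blast
  then show ?thesis
  proof eventually_elim
    case (elim \<omega>)
    show ?case
    proof (intro allI impI)
      fix k assume "\<omega> \<in> A k"
      then show "ER M ?B \<omega> \<subseteq> ER M (Ys k) \<omega>"
        using elim by (intro ER_sub_closed) (auto simp: ER_def)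
    qed
  qed
qed

lemma Nset_meas:
  fixes B :: "('a \<Rightarrow> 'b::euclidean_space) set"
  assumes M: "prob_space M" and B: "L0_stable M B"
  shows "Nset M B j \<in> sets M"
proof -
  have xm: "erx M B i \<in> borel_measurable M" for i using stable_meas[OF B erx_in[OF M B]] .
  have "{\<omega>\<in>space M. ER M B \<omega> \<inter> bball j \<noteq> {}} \<in> sets M"
    unfolding ER_def by (rule closure_range_meas[where x="erx M B", OF xm bball_open])
  then have "space M - {\<omega>\<in>space M. ER M B \<omega> \<inter> bball j \<noteq> {}} \<in> sets M" by blast
  moreover have "Nset M B j = space M - {\<omega>\<in>space M. ER M B \<omega> \<inter> bball j \<noteq> {}}" unfolding Nset_def by blast
  ultimately show ?thesis by simp
qed

lemma ER_ess:
  fixes \<B> :: "('a \<Rightarrow> 'b::euclidean_space) set set"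
  assumes M: "prob_space M" and ne: "\<B> \<noteq> {}" and st: "\<And>B. B \<in> \<B> \<Longrightarrow> L0_stable M B"
    and pc: "\<And>A Ys. L0_partition M A \<Longrightarrow> (\<And>k. Ys k \<in> \<B>) \<Longrightarrow> L0_paste_set M A Ys \<in> \<B>"
  shows "\<exists>B0\<in>\<B>. \<forall>B\<in>\<B>. AE \<omega> in M. \<omega> \<in> Nset M B j \<longrightarrow> \<omega> \<in> Nset M B0 j"
proof -
  have "\<exists>F\<in>(\<lambda>B. Nset M B j) ` \<B>. \<forall>E\<in>(\<lambda>B. Nset M B j) ` \<B>. AE \<omega> in M. \<omega> \<in> E \<longrightarrow> \<omega> \<in> F"
  proof (rule ess_max[OF M])
    show "(\<lambda>B. Nset M B j) ` \<B> \<subseteq> sets M" using Nset_meas[OF M st] by blast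
    show "(\<lambda>B. Nset M B j) ` \<B> \<noteq> {}" using ne by blast
    fix E :: "nat \<Rightarrow> 'a set" assume "range E \<subseteq> (\<lambda>B. Nset M B j) ` \<B>"
    then have "\<forall>k. \<exists>B\<in>\<B>. E k = Nset M B j" by blast
    then obtain Bs where Bs: "\<And>k. Bs k \<in> \<B>" "\<And>k. E k = Nset M (Bs k) j" by metis
    have Em: "E k \<in> sets M" for k using Bs Nset_meas[OF M st] by simp
    define A where "A = fpart M E"
    have A: "L0_partition M A" unfolding A_def using fpart_partition[OF Em] .
    have PB: "L0_paste_set M A Bs \<in> \<B>" using pc[OF A Bs(1)] .
    have "AE \<omega> in M. \<forall>k. \<omega> \<in> A k \<longrightarrow> ER M (L0_paste_set M A Bs) \<omega> \<subseteq> ER M (Bs k) \<omega>"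
      using ER_paste[OF M A st[OF Bs(1)] st[OF PB]] .
    then have "AE \<omega> in M. \<omega> \<in> (\<Union>i. E i) \<longrightarrow> \<omega> \<in> Nset M (L0_paste_set M A Bs) j" using AE_space
    proof eventually_elim
      case (elim \<omega>)
      show ?case
      proof
        assume U: "\<omega> \<in> (\<Union>i. E i)"
        obtain k where k: "\<omega> \<in> A k" using L0_partition_cover[OF A elim(2)] by blast
        have "\<omega> \<in> E k" using fpart_first[OF k[unfolded A_def] U] by blast
        then have "ER M (Bs k) \<omega> \<inter> bball j = {}" using Bs(2)[of k] unfolding Nset_def by blast
        then have "ER M (L0_paste_set M A Bs) \<omega> \<inter> bball j = {}" using elim(1) k by blast
        then show "\<omega> \<in> Nset M (L0_paste_set M A Bs) j" using elim(2) unfolding Nset_def by blast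
      qed
    qed
    then show "\<exists>F\<in>(\<lambda>B. Nset M B j) ` \<B>. AE \<omega> in M. \<omega> \<in> (\<Union>i. E i) \<longrightarrow> \<omega> \<in> F" using PB by blast
  qed
  then show ?thesis by blast
qed

primrec chainB :: "(('a \<Rightarrow> 'b) set \<Rightarrow> nat \<Rightarrow> ('a \<Rightarrow> 'b) set) \<Rightarrow> (nat \<Rightarrow> ('a \<Rightarrow> 'b) set) \<Rightarrow> nat \<Rightarrow> ('a \<Rightarrow> 'b) set" where
  "chainB nx bs 0 = bs 0"
| "chainB nx bs (Suc n) = nx (chainB nx bs n) (Suc n)"




lemma nest_meet:
  fixes X :: "nat \<Rightarrow> 'b::euclidean_space set"
  assumes cX: "\<And>n. compact (X n)" and dec: "\<And>n. X (Suc n) \<subseteq> X n" and C: "closed C"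
  shows "(\<Inter>n. X n) \<inter> C \<noteq> {} \<longleftrightarrow> (\<forall>n. X n \<inter> C \<noteq> {})"
proof
  assume "(\<Inter>n. X n) \<inter> C \<noteq> {}"
  then show "\<forall>n. X n \<inter> C \<noteq> {}" by blast
next
  assume H: "\<forall>n. X n \<inter> C \<noteq> {}"
  have "\<Inter>(range (\<lambda>n. X n \<inter> C)) \<noteq> {}"
  proof (rule compact_nest)
    show "compact (X n \<inter> C)" for n using compact_Int_closed[OF cX C] .
    show "X n \<inter> C \<noteq> {}" for n using H by blast
    show "X n \<inter> C \<subseteq> X m \<inter> C" if "m \<le> n" for m n
      using lift_Suc_antimono_le[of X, OF dec that] by blast
  qed
  then show "(\<Inter>n. X n) \<inter> C \<noteq> {}" by blast
qed

lemma iii_imp_compact: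
  fixes K :: "('a \<Rightarrow> 'b::euclidean_space) set"
  assumes M: "prob_space M" and K: "L0_stable M K" and sc: "L0_seq_closed M K" and bd: "L0_bounded M K"
  shows "L0_stable_compact M K"
  unfolding L0_stable_compact_def
proof (intro conjI allI impI)
  show "L0_stable M K" by fact
  fix \<F> assume SF: "L0_stable_filter M K \<F>"
  then have FI: "L0_filter M K \<F>" unfolding L0_stable_filter_def by blast
  have FK: "\<And>F. F \<in> \<F> \<Longrightarrow> F \<subseteq> K" using FI unfolding L0_filter_def by blast
  have KF: "K \<in> \<F>" using FI unfolding L0_filter_def by blast
  have Fint: "\<And>F G. F \<in> \<F> \<Longrightarrow> G \<in> \<F> \<Longrightarrow> F \<inter> G \<in> \<F>" using FI unfolding L0_filter_def by blast
  obtain \<B> where BF: "\<B> \<subseteq> \<F>" and base: "\<And>F. F \<in> \<F> \<Longrightarrow> \<exists>B\<in>\<B>. B \<subseteq> F"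
    and st: "\<And>B. B \<in> \<B> \<Longrightarrow> L0_stable M B"
    and pc: "\<And>A Ys. L0_partition M A \<Longrightarrow> (\<And>k. Ys k \<in> \<B>) \<Longrightarrow> L0_paste_set M A Ys \<in> \<B>"
    using SF unfolding L0_stable_filter_def by metis
  have Bne: "\<B> \<noteq> {}" using base[OF KF] by blast
  have "\<forall>j. \<exists>B0\<in>\<B>. \<forall>B\<in>\<B>. AE \<omega> in M. \<omega> \<in> Nset M B j \<longrightarrow> \<omega> \<in> Nset M B0 j"
    using ER_ess[OF M Bne st pc] by blast
  then obtain Bstar where Bstar: "\<And>j. Bstar j \<in> \<B>"
    and Bmax: "\<And>j B. B \<in> \<B> \<Longrightarrow> AE \<omega> in M. \<omega> \<in> Nset M B j \<longrightarrow> \<omega> \<in> Nset M (Bstar j) j"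
    by metis
  define nx where "nx X j = (SOME B. B \<in> \<B> \<and> B \<subseteq> X \<inter> Bstar j)" for X j
  have nx: "nx X j \<in> \<B> \<and> nx X j \<subseteq> X \<inter> Bstar j" if X: "X \<in> \<B>" for X j
  proof -
    have "X \<inter> Bstar j \<in> \<F>" using Fint BF X Bstar by blast
    then have "\<exists>B. B \<in> \<B> \<and> B \<subseteq> X \<inter> Bstar j" using base by blast
    then show ?thesis unfolding nx_def by (rule someI_ex)
  qed
  define Bn where "Bn = chainB nx Bstar"
  have Bn: "Bn n \<in> \<B> \<and> Bn n \<subseteq> Bstar n" for n
  proof (induction n)
    case 0 show ?case using Bstar[of 0] by (simp add: Bn_def)
  next
    case (Suc n) show ?case using nx[of "Bn n" "Suc n"] Suc by (simp add: Bn_def)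
  qed
  have Bdec: "Bn (Suc n) \<subseteq> Bn n" for n using nx[of "Bn n" "Suc n"] Bn[of n] by (simp add: Bn_def)
  have stB: "L0_stable M (Bn n)" for n using st Bn by blast
  have BnK: "Bn n \<subseteq> K" for n using FK BF Bn by blast
  have erxK: "erx M (Bn n) i \<in> K" for n i using erx_in[OF M stB] BnK by blast
  have erxm[measurable]: "erx M (Bn n) i \<in> borel_measurable M" for n i using stable_meas[OF K erxK] .
  obtain r0 where r0m: "r0 \<in> borel_measurable M" and r0: "\<And>y. y \<in> K \<Longrightarrow> AE \<omega> in M. norm (y \<omega>) \<le> r0 \<omega>"
    using bd unfolding L0_bounded_def by blast
  have "AE \<omega> in M. (\<forall>n i. norm (erx M (Bn n) i \<omega>) \<le> r0 \<omega>) \<and> (\<forall>n. ER M (Bn (Suc n)) \<omega> \<subseteq> ER M (Bn n) \<omega>)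
      \<and> (\<forall>n. ER M (Bn n) \<omega> \<subseteq> ER M (Bstar n) \<omega>)"
  proof -
    have "AE \<omega> in M. \<forall>n i. norm (erx M (Bn n) i \<omega>) \<le> r0 \<omega>"
      using r0 erxK by (simp add: AE_all_countable)
    moreover have "AE \<omega> in M. \<forall>n. ER M (Bn (Suc n)) \<omega> \<subseteq> ER M (Bn n) \<omega>"
      using ER_mono[OF M stB stB Bdec] by (simp add: AE_all_countable)
    moreover have "AE \<omega> in M. \<forall>n. ER M (Bn n) \<omega> \<subseteq> ER M (Bstar n) \<omega>"
      using ER_mono[OF M stB st[OF Bstar]] Bn by (simp add: AE_all_countable)
    ultimately show ?thesis by eventually_elim blast
  qed
  then obtain N where N: "\<And>\<omega>. \<omega> \<in> space M - N \<Longrightarrow> (\<forall>n i. norm (erx M (Bn n) i \<omega>) \<le> r0 \<omega>) \<and> (\<forall>n. ER M (Bn (Suc n)) \<omega> \<subseteq> ER M (Bn n) \<omega>)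
      \<and> (\<forall>n. ER M (Bn n) \<omega> \<subseteq> ER M (Bstar n) \<omega>)" and Nnull: "N \<in> null_sets M"
    by (rule AE_E3) auto
  have Nm[measurable]: "N \<in> sets M" using Nnull by blast
  have bdd: "bounded (range (\<lambda>i. erx M (Bn n) i \<omega>))" if "\<omega> \<in> space M - N" for \<omega> n
  proof -
    have "range (\<lambda>i. erx M (Bn n) i \<omega>) \<subseteq> cball 0 (r0 \<omega>)" using N[OF that] by auto
    then show ?thesis using bounded_cball bounded_subset by blast
  qed
  have Tc: "compact (ER M (Bn n) \<omega>)" if "\<omega> \<in> space M - N" for \<omega> n
    unfolding ER_def using bdd[OF that] by simp
  have Tdec: "ER M (Bn (Suc n)) \<omega> \<subseteq> ER M (Bn n) \<omega>" if "\<omega> \<in> space M - N" for \<omega> n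
    using N[OF that] by blast
  define T where "T \<omega> = (if \<omega> \<in> N then {0} else (\<Inter>n. ER M (Bn n) \<omega>))" for \<omega>
  have "\<exists>y\<in>borel_measurable M. \<forall>\<omega>\<in>space M. y \<omega> \<in> T \<omega>"
  proof (rule krn_select)
    fix \<omega> assume \<omega>: "\<omega> \<in> space M"
    show "T \<omega> \<noteq> {}"
    proof (cases "\<omega> \<in> N")
      case False
      have "\<Inter>(range (\<lambda>n. ER M (Bn n) \<omega>)) \<noteq> {}"
      proof (rule compact_nest)
        show "compact (ER M (Bn n) \<omega>)" for n using Tc \<omega> False by blast
        show "ER M (Bn n) \<omega> \<noteq> {}" for n unfolding ER_def by simp
        show "ER M (Bn n) \<omega> \<subseteq> ER M (Bn m) \<omega>" if "m \<le> n" for m n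
          using lift_Suc_antimono_le[of "\<lambda>n. ER M (Bn n) \<omega>", OF _ that] Tdec \<omega> False by blast
      qed
      then show ?thesis using False unfolding T_def by simp
    qed (simp add: T_def)
    show "closed (T \<omega>)" unfolding T_def ER_def by auto
  next
    fix c t
    show "{\<omega> \<in> space M. T \<omega> \<inter> cball c t \<noteq> {}} \<in> sets M"
    proof (cases "t < 0")
      case True then show ?thesis by simp
    next
      case False
      then have Cne: "cball c t \<noteq> {}" by simp
      have eq: "{\<omega> \<in> space M. T \<omega> \<inter> cball c t \<noteq> {}} =
         (N \<inter> space M \<inter> {\<omega>. 0 \<in> cball c t}) \<union> ((space M - N) \<inter> (\<Inter>n. {\<omega>\<in>space M. \<forall>m::nat. \<exists>i. infdist (erx M (Bn n) i \<omega>) (cball c t) < 1 / Suc m}))"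
      proof (rule set_eqI)
        fix \<omega>
        show "\<omega> \<in> {\<omega> \<in> space M. T \<omega> \<inter> cball c t \<noteq> {}} \<longleftrightarrow> \<omega> \<in> (N \<inter> space M \<inter> {\<omega>. 0 \<in> cball c t}) \<union> ((space M - N) \<inter> (\<Inter>n. {\<omega>\<in>space M. \<forall>m::nat. \<exists>i. infdist (erx M (Bn n) i \<omega>) (cball c t) < 1 / Suc m}))"
        proof (cases "\<omega> \<in> space M - N")
          case True
          have "T \<omega> \<inter> cball c t \<noteq> {} \<longleftrightarrow> (\<forall>n. ER M (Bn n) \<omega> \<inter> cball c t \<noteq> {})"
            using True nest_meet[of "\<lambda>n. ER M (Bn n) \<omega>" "cball c t"] Tc[OF True] Tdec[OF True]
            unfolding T_def by simp
          also have "\<dots> \<longleftrightarrow> (\<forall>n. \<forall>m::nat. \<exists>i. infdist (erx M (Bn n) i \<omega>) (cball c t) < 1 / Suc m)"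
            unfolding ER_def using closure_meet_iff[OF bdd[OF True] closed_cball Cne] by simp
          finally show ?thesis using True by blast
        next
          case False
          then show ?thesis using sets.sets_into_space[OF Nm] by (cases "\<omega> \<in> space M") (auto simp: T_def)
        qed
      qed
      have "(\<Inter>n. {\<omega>\<in>space M. \<forall>m::nat. \<exists>i. infdist (erx M (Bn n) i \<omega>) (cball c t) < 1 / Suc m}) \<in> sets M"
        by measurable
      moreover have "N \<inter> space M \<inter> {\<omega>. 0 \<in> cball c t} \<in> sets M"
        by (cases "0 \<in> cball c t") auto
      ultimately show ?thesis unfolding eq by auto
    qed
  qed
  then obtain c0 where c0m: "c0 \<in> borel_measurable M" and c0T: "\<And>\<omega>. \<omega> \<in> space M \<Longrightarrow> c0 \<omega> \<in> T \<omega>" by blast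
  have notN: "AE \<omega> in M. \<omega> \<notin> N" using AE_not_in[OF Nnull] .
  have c0ER: "c0 \<omega> \<in> ER M (Bn n) \<omega>" if "\<omega> \<in> space M - N" for \<omega> n
    using c0T[of \<omega>] that unfolding T_def by auto
  have c0K: "c0 \<in> K"
  proof (rule stable_closure_in[where xs="erx M (Bn 0)", OF K sc erxK c0m])
    show "AE \<omega> in M. c0 \<omega> \<in> closure (range (\<lambda>i. erx M (Bn 0) i \<omega>))"
      using notN AE_space by eventually_elim (use c0ER in \<open>auto simp: ER_def\<close>)
  qed
  have key: "AE \<omega> in M. c0 \<omega> \<in> ER M B \<omega>" if B: "B \<in> \<B>" for B
  proof -
    have "AE \<omega> in M. \<forall>j. \<omega> \<in> Nset M B j \<longrightarrow> \<omega> \<in> Nset M (Bstar j) j"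
      using Bmax[OF B] by (simp add: AE_all_countable)
    then show ?thesis using notN AE_space
    proof eventually_elim
      case (elim \<omega>)
      have \<omega>: "\<omega> \<in> space M - N" using elim by blast
      show ?case
      proof (rule ccontr)
        assume nin: "c0 \<omega> \<notin> ER M B \<omega>"
        have "open (- ER M B \<omega>)" unfolding ER_def by auto
        then obtain \<epsilon> where e: "0 < \<epsilon>" "ball (c0 \<omega>) \<epsilon> \<subseteq> - ER M B \<omega>"
          using nin open_contains_ball by blast
        obtain j where j: "c0 \<omega> \<in> bball j" "bcball j \<subseteq> ball (c0 \<omega>) \<epsilon>" using bbasis[OF e(1)] by blast
        have "ER M B \<omega> \<inter> bball j = {}" using j(2) e(2) bball_sub by blast
        then have "\<omega> \<in> Nset M B j" using elim(3) unfolding Nset_def by blast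
        then have "ER M (Bstar j) \<omega> \<inter> bball j = {}" using elim(1) unfolding Nset_def by blast
        moreover have "c0 \<omega> \<in> ER M (Bstar j) \<omega>" using c0ER[OF \<omega>, of j] N[OF \<omega>] by blast
        ultimately show False using j(1) by blast
      qed
    qed
  qed
  show "\<exists>x\<in>K. L0_cluster M \<F> x"
  proof (intro bexI[OF _ c0K])
    show "L0_cluster M \<F> c0"
      unfolding L0_cluster_def
    proof (intro conjI ballI allI impI)
      show "c0 \<in> L0 M" using c0m unfolding L0_def .
      fix F U assume F: "F \<in> \<F>" and U: "L0_open M U \<and> c0 \<in> U"
      obtain B where B: "B \<in> \<B>" "B \<subseteq> F" using base[OF F] by blast
      obtain z \<rho> where z: "z \<in> L0 M" and \<rho>: "L0_pos M \<rho>" and cb: "c0 \<in> L0_ball M z \<rho>" and bU: "L0_ball M z \<rho> \<subseteq> U"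
        using U unfolding L0_open_def by blast
      have stBB: "L0_stable M B" using st[OF B(1)] .
      have xm[measurable]: "erx M B i \<in> borel_measurable M" for i using stable_meas[OF stBB erx_in[OF M stBB]] .
      have zm[measurable]: "z \<in> borel_measurable M" using z unfolding L0_def .
      have \<rho>m[measurable]: "\<rho> \<in> borel_measurable M" using \<rho> unfolding L0_pos_def by blast
      define E where "E i = {\<omega>\<in>space M. norm (z \<omega> - erx M B i \<omega>) < \<rho> \<omega>}" for i
      have Em: "E i \<in> sets M" for i unfolding E_def by measurable
      have zc: "AE \<omega> in M. norm (z \<omega> - c0 \<omega>) < \<rho> \<omega>" using cb unfolding L0_ball_def by blast
      have cov: "AE \<omega> in M. \<exists>i. \<omega> \<in> E i"
        using key[OF B(1)] zc AE_space
      proof eventually_elim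
        case (elim \<omega>)
        have "0 < \<rho> \<omega> - norm (z \<omega> - c0 \<omega>)" using elim(2) by simp
        then obtain y where y: "y \<in> range (\<lambda>i. erx M B i \<omega>)" "dist y (c0 \<omega>) < \<rho> \<omega> - norm (z \<omega> - c0 \<omega>)"
          using elim(1) unfolding ER_def closure_approachable by blast
        then obtain i where i: "y = erx M B i \<omega>" by blast
        have "norm (z \<omega> - y) \<le> norm (z \<omega> - c0 \<omega>) + norm (c0 \<omega> - y)"
          using norm_triangle_ineq[of "z \<omega> - c0 \<omega>" "c0 \<omega> - y"] by simp
        then have "norm (z \<omega> - y) < \<rho> \<omega>" using y(2) by (simp add: dist_norm norm_minus_commute)
        then show ?case using i elim(3) unfolding E_def by blast
      qed
      obtain y where yB: "y \<in> B" and y: "AE \<omega> in M. \<exists>i. \<omega> \<in> E i \<and> y \<omega> = erx M B i \<omega>"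
        using stable_paste_ae[where xs="erx M B" and E=E, OF stBB erx_in[OF M stBB] Em cov] by (elim bexE)
      have "AE \<omega> in M. norm (z \<omega> - y \<omega>) < \<rho> \<omega>" using y by eventually_elim (auto simp: E_def)
      moreover have "y \<in> L0 M" using stable_meas[OF stBB yB] unfolding L0_def .
      ultimately have "y \<in> L0_ball M z \<rho>" unfolding L0_ball_def by blast
      then show "U \<inter> F \<noteq> {}" using bU yB B(2) by blast
    qed
  qed
qed




theorem mainTheorem12:
  fixes M :: "'a measure" and K :: "('a \<Rightarrow> real ^ 'd) set"
  assumes "prob_space M" and "L0_saturated M K"
  shows "(L0_stable_compact M K \<longleftrightarrow> L0_stable M K \<and> L0_closed M K \<and> L0_bounded M K)
    \<and> (L0_stable M K \<and> L0_closed M K \<and> L0_bounded M K \<longleftrightarrow>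
         L0_stable M K \<and> L0_seq_closed M K \<and> L0_bounded M K)
    \<and> (L0_stable M K \<and> L0_seq_closed M K \<and> L0_bounded M K \<longleftrightarrow>
         (\<exists>S. meas_corr M S \<and> nonempty_compact_values M S \<and> K = L0_selectors M S))
    \<and> (\<forall>S S'. meas_corr M S \<and> nonempty_compact_values M S \<and> K = L0_selectors M S \<and>
              meas_corr M S' \<and> nonempty_compact_values M S' \<and> K = L0_selectors M S' \<longrightarrow>
              (AE \<omega> in M. S \<omega> = S' \<omega>))"
proof -
  note M = assms(1)
  have e2: "L0_stable M K \<and> L0_closed M K \<and> L0_bounded M K \<longleftrightarrow>
         L0_stable M K \<and> L0_seq_closed M K \<and> L0_bounded M K"
    using closed_imp_seq_closed[of M K] seq_closed_imp_closed[OF M, of K] by blast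
  have e1: "L0_stable_compact M K \<longleftrightarrow> L0_stable M K \<and> L0_seq_closed M K \<and> L0_bounded M K"
  proof
    assume C: "L0_stable_compact M K"
    show "L0_stable M K \<and> L0_seq_closed M K \<and> L0_bounded M K"
      using C compact_imp_seq_closed[OF C] stable_compact_imp_bounded[OF M C]
      unfolding L0_stable_compact_def by blast
  next
    assume "L0_stable M K \<and> L0_seq_closed M K \<and> L0_bounded M K"
    then show "L0_stable_compact M K" using iii_imp_compact[OF M] by blast
  qed
  have e3: "L0_stable M K \<and> L0_seq_closed M K \<and> L0_bounded M K \<longleftrightarrow>
         (\<exists>S. meas_corr M S \<and> nonempty_compact_values M S \<and> K = L0_selectors M S)"
  proof
    assume "L0_stable M K \<and> L0_seq_closed M K \<and> L0_bounded M K"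
    then show "\<exists>S. meas_corr M S \<and> nonempty_compact_values M S \<and> K = L0_selectors M S"
      using iii_imp_iv[OF M] by blast
  next
    assume "\<exists>S. meas_corr M S \<and> nonempty_compact_values M S \<and> K = L0_selectors M S"
    then obtain S where S: "meas_corr M S" "nonempty_compact_values M S" "K = L0_selectors M S" by blast
    show "L0_stable M K \<and> L0_seq_closed M K \<and> L0_bounded M K"
      using iv_imp_iii[OF S(1,2)] S(3) by simp
  qed
  have e4: "\<forall>S S'. meas_corr M S \<and> nonempty_compact_values M S \<and> K = L0_selectors M S \<and>
              meas_corr M S' \<and> nonempty_compact_values M S' \<and> K = L0_selectors M S' \<longrightarrow>
              (AE \<omega> in M. S \<omega> = S' \<omega>)"
  proof (intro allI impI)
    fix S S' :: "'a \<Rightarrow> (real ^ 'd) set"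
    assume a: "meas_corr M S \<and> nonempty_compact_values M S \<and> K = L0_selectors M S \<and>
              meas_corr M S' \<and> nonempty_compact_values M S' \<and> K = L0_selectors M S'"
    then show "AE \<omega> in M. S \<omega> = S' \<omega>" using selectors_unique[of M S S'] by auto
  qed
  show ?thesis using e1 e2 e3 e4 by blast
qed


end
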